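(* Let $y = \lambda_7^2\lambda_5\lambda_{14} + \lambda_7^2\lambda_9\lambda_{10} + \lambda_7\lambda_{11}\lambda_9\lambda_6 \in \Lambda_4$ and let $x \in H_{33}(B(\mathbb{Z}/2)^4)$ be the sum of the 62 monomials $a_4^{(t_4)}a_3^{(t_3)}a_2^{(t_2)}a_1^{(t_1)}$ with $(t_4,t_3,t_2,t_1)$ ranging over (14,5,7,7), (14,3,9,7), (14,3,5,11), (14,3,3,13), (13,6,7,7), (13,3,10,7), (13,3,6,11), (13,3,3,14), (11,6,9,7), (11,6,5,11), (11,6,3,13), (11,5,10,7), (11,5,6,11), (11,5,3,14), (10,9,7,7), (10,7,9,7), (10,7,5,11), (10,7,3,13), (10,5,11,7), (10,3,13,7), (9,10,7,7), (9,7,10,7), (9,7,6,11), (9,7,3,14), (9,6,11,7), (9,3,14,7), (7,10,9,7), (7,10,5,11), (7,10,3,13), (7,9,10,7), (7,9,6,11), (7,9,3,14), (7,6,13,7), (7,5,14,7), (6,13,7,7), (6,11,9,7), (6,11,5,11), (6,11,3,13), (6,9,7,11), (6,7,7,13), (6,5,11,11), (6,3,13,11), (5,14,7,7), (5,11,10,7), (5,11,6,11), (5,11,3,14), (5,10,7,11), (5,7,7,14), (5,6,11,11), (5,3,14,11), (3,14,9,7), (3,14,5,11), (3,14,3,13), (3,13,10,7), (3,13,6,11), (3,13,3,14), (3,10,7,13), (3,9,7,14), (3,6,11,13), (3,5,11,14), (3,3,14,13), (3,3,13,14). Then $x \in P_{\mathcal{A}}H_{33}(B(\mathbb{Z}/2)^4)$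 and $\varphi_4(x) = y$ in $\Lambda_4$. Consequently $x$ is an explicit preimage under the Singer transfer $\varphi_4$ of the indecomposable class $p_0 \in \mathrm{Ext}_{\mathcal{A}}^{4,37}(\mathbb{Z}/2,\mathbb{Z}/2)$, represented by $y$; in particular $p_0$ lies in the image of $\varphi_4$.
   Context: The Lambda algebra $\Lambda$ is the differential algebra over $\mathbb{Z}/2$ generated by $\lambda_t$, $t\ge 0$, subject to the Adem relations $\lambda_a\lambda_b = \sum_j\binom{j-b-1}{2j-a}\lambda_{a+b-j}\lambda_j$ for $a>2b$, with differential the derivation given by $\delta(\lambda_m) = \sum_{t\ge 0}\binom{m-1-t}{t+1}\lambda_{m-1-t}\lambda_t$; $\Lambda_k$ is the span of length-$k$ monomials, and its cohomology computes $\mathrm{Ext}_{\mathcal{A}}^{k,*}(\mathbb{Z}/2,\mathbb{Z}/2)$ ($\mathcal{A}$ the mod 2 Steenrod algebra). The element $y$ is a cocycle representing $p_0$. $H_*(B(\mathbb{Z}/2)^k)=\Gamma[a_k,\dots,a_1]$ is the divided power algebra with basis $a_k^{(t_k)}\cdots a_1^{(t_1)}$ of degree $\sum t_i$; dual Steenrod squares act on the right by $(a^{(t)})Sq_*^j = \binom{t-j}{j}a^{(t-j)}$ and the Cartan formula; $P_{\mathcal{A}}H_*$ consists of $x$ with $(x)Sq_*^{2^t} = 0$ for all $t\ge0$. The transfer $\varphi_k : H_*(B(\mathbb{Z}/2)^k)\to\Lambda_k$ is defined by $\varphi_1(a_1^{(t)})=\lambda_t$ and $\varphi_k(a_k^{(t_k)}\cdots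 a_1^{(t_1)}) = \sum_{i\ge t_1}\lambda_i\,\varphi_{k-1}((a_k^{(t_k)}\cdots a_2^{(t_2)})Sq_*^{i-t_1})$, with $a_k,\dots,a_2$ renamed $a_{k-1},\dots,a_1$ in the argument of $\varphi_{k-1}$. A class $[y]$ is in the image of $\varphi_k$ if $[y]=[\varphi_k(x)]$ for some $x\in P_{\mathcal{A}}H_*(B(\mathbb{Z}/2)^k)$. *)

theory Defs
  imports Main "HOL-Library.Z2"
begin

text \<open>Vectors over Z/2 with basis indexed by 'a are functions 'a \<Rightarrow> bit
  (coefficient functions; all vectors considered have finite support).\<close>

definition supp :: "('a \<Rightarrow> bit) \<Rightarrow> 'a set" where
  "supp x = {w. x w \<noteq> 0}"

definition lin :: "('a \<Rightarrow> 'b \<Rightarrow> bit) \<Rightarrow> ('a \<Rightarrow> bit) \<Rightarrow> 'b \<Rightarrow> bit" where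
  "lin f x = (\<lambda>v. \<Sum>w\<in>supp x. x w * f w v)"

definition basis_vec :: "'a \<Rightarrow> 'a \<Rightarrow> bit" where
  "basis_vec w = (\<lambda>v. if v = w then 1 else 0)"

text \<open>Divided power algebra H_*(B(Z/2)^k) = Gamma[a_k,...,a_1].
  The basis monomial a_k^(t_k) ... a_1^(t_1) is encoded by the list [t_1, t_2, ..., t_k]
  (note: reversed order, so that a_1 comes first).
  Dual Steenrod square Sq_*^j on a basis monomial, via
  (a^(t)) Sq_*^i = binom(t-i, i) a^(t-i) and the Cartan formula.\<close>
fun sqm :: "nat \<Rightarrow> nat list \<Rightarrow> nat list \<Rightarrow> bit" where
  "sqm j [] = (\<lambda>v. if v = [] \<and> j = 0 then 1 else 0)"
| "sqm j (t # ts) = (\<lambda>v. case v of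
       [] \<Rightarrow> 0
     | s # vs \<Rightarrow> (if s \<le> t \<and> t - s \<le> j
                  then of_nat (s choose (t - s)) * sqm (j - (t - s)) ts vs
                  else 0))"

definition Sq_dual :: "nat \<Rightarrow> (nat list \<Rightarrow> bit) \<Rightarrow> nat list \<Rightarrow> bit" where
  "Sq_dual j x = lin (sqm j) x"

definition is_A_primitive :: "(nat list \<Rightarrow> bit) \<Rightarrow> bool" where
  "is_A_primitive x \<longleftrightarrow> (\<forall>t. Sq_dual (2 ^ t) x = (\<lambda>_. 0))"

definition homogeneous_H :: "nat \<Rightarrow> nat \<Rightarrow> (nat list \<Rightarrow> bit) \<Rightarrow> bool" where
  "homogeneous_H k d x \<longleftrightarrow> finite (supp x) \<and>
     (\<forall>ts\<in>supp x. length ts = k \<and> sum_list ts = d)"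

text \<open>Elements of the free (tensor) algebra over Z/2 on lambda_0, lambda_1, ...:
  the word [i_1,...,i_k] stands for lambda_{i_1} ... lambda_{i_k}.

  Singer transfer phi_k on basis monomials (list [t_1,...,t_k]):
  phi_k(a_k^(t_k)...a_1^(t_1)) = sum_{i >= t_1} lambda_i phi_{k-1}((a_k^(t_k)...a_2^(t_2)) Sq_*^{i-t_1}).\<close>
primrec phi :: "nat \<Rightarrow> nat list \<Rightarrow> nat list \<Rightarrow> bit" where
  "phi 0 ts = (\<lambda>w. if w = [] \<and> ts = [] then 1 else 0)"
| "phi (Suc k) ts = (case ts of
       [] \<Rightarrow> (\<lambda>w. 0)
     | t # us \<Rightarrow> (\<lambda>w. case w of
          [] \<Rightarrow> 0
        | i # w' \<Rightarrow> (if t \<le> i then lin (phi k) (sqm (i - t) us) w' else 0)))"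

definition phi_lin :: "nat \<Rightarrow> (nat list \<Rightarrow> bit) \<Rightarrow> nat list \<Rightarrow> bit" where
  "phi_lin k x = lin (phi k) x"

text \<open>Adem relation element lambda_a lambda_b + sum_j binom(j-b-1, 2j-a) lambda_{a+b-j} lambda_j
  (for a > 2b; the summation range is exactly where the binomial can be nonzero).\<close>
definition adem_rel :: "nat \<Rightarrow> nat \<Rightarrow> nat list \<Rightarrow> bit" where
  "adem_rel a b = (\<lambda>w. basis_vec [a, b] w +
     (\<Sum>j\<in>{j. a \<le> 2 * j \<and> j + b + 1 \<le> a}.
         of_nat ((j - b - 1) choose (2 * j - a)) * basis_vec [a + b - j, j] w))"

text \<open>u * r * v for words u, v and an element r of the free algebra.\<close>
definition sandwich :: "nat list \<Rightarrow> (nat list \<Rightarrow> bit) \<Rightarrow> nat list \<Rightarrow> nat list \<Rightarrow> bit" where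
  "sandwich u r v = (\<lambda>w. if length u + length v \<le> length w \<and> take (length u) w = u
        \<and> drop (length w - length v) w = v
     then r (drop (length u) (take (length w - length v) w)) else 0)"

text \<open>Two-sided ideal of the free algebra generated by the Adem relations
  (over Z/2 it is the span of all u * R * v).\<close>
inductive_set adem_ideal :: "(nat list \<Rightarrow> bit) set" where
  zero: "(\<lambda>_. 0) \<in> adem_ideal"
| step: "r \<in> adem_ideal \<Longrightarrow> 2 * b < a \<Longrightarrow>
           (\<lambda>w. r w + sandwich u (adem_rel a b) v w) \<in> adem_ideal"

definition lambda_eq :: "(nat list \<Rightarrow> bit) \<Rightarrow> (nat list \<Rightarrow> bit) \<Rightarrow> bool" where
  "lambda_eq p q \<longleftrightarrow> (\<lambda>w. p w - q w) \<in> adem_ideal"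

definition vec_of_list :: "'a list \<Rightarrow> 'a \<Rightarrow> bit" where
  "vec_of_list ws = (\<lambda>w. \<Sum>u\<leftarrow>ws. basis_vec u w)"

end

theory Submission
  imports Defs
begin


declare add_bit_eq_xor[simp del] mult_bit_eq_and[simp del]

definition cnt :: "'a list \<Rightarrow> 'a \<Rightarrow> bit" where
  "cnt L = (\<lambda>w. of_nat (count_list L w))"

lemma of_nat_bit: "(of_nat n :: bit) = of_bool (odd n)"
  by (induction n) (auto simp: add_bit_eq_xor)

lemma cnt_append: "cnt (A @ B) w = cnt A w + cnt B w"
  by (simp add: cnt_def)

lemma cnt_Nil: "cnt [] w = 0" by (simp add: cnt_def)

lemma vec_of_list_cnt: "vec_of_list ws = cnt ws"
proof -
  have "vec_of_list ws w = cnt ws w" for w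
    by (induction ws) (auto simp: vec_of_list_def basis_vec_def cnt_def)
  then show ?thesis by auto
qed

lemma supp_cnt: "supp (cnt L) \<subseteq> set L"
  by (auto simp: supp_def cnt_def) (metis count_list_0_iff of_nat_0 zero_neq_one)

lemma sum_list_count_gen:
  "sum_list (map f xs) = (\<Sum>x\<in>set xs. of_nat (count_list xs x) * (f x :: 'b::comm_semiring_1))"
proof (induction xs)
  case (Cons x xs)
  have "(\<Sum>y\<in>set (x#xs). of_nat (count_list (x#xs) y) * f y) =
     (\<Sum>y\<in>insert x (set xs). (if x = y then f y else 0) + of_nat (count_list xs y) * f y)"
    by (rule sum.cong) (auto simp: distrib_right)
  also have "\<dots> = (\<Sum>y\<in>insert x (set xs). if x = y then f y else 0) +
      (\<Sum>y\<in>insert x (set xs). of_nat (count_list xs y) * f y)"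
    by (simp add: sum.distrib)
  also have "(\<Sum>y\<in>insert x (set xs). if x = y then f y else 0) = f x"
    by (simp add: sum.delta)
  also have "(\<Sum>y\<in>insert x (set xs). of_nat (count_list xs y) * f y) =
      (\<Sum>y\<in>set xs. of_nat (count_list xs y) * f y)"
    by (rule sum.mono_neutral_right) (auto simp: count_list_0_iff)
  finally show ?case using Cons by simp
qed simp

lemma lin_cnt: "lin f (cnt L) = (\<lambda>v. sum_list (map (\<lambda>w. f w v) L))"
proof
  fix v
  have "sum_list (map (\<lambda>w. f w v) L) = (\<Sum>w\<in>set L. of_nat (count_list L w) * f w v)"
    by (rule sum_list_count_gen)
  also have "\<dots> = (\<Sum>w\<in>supp (cnt L). cnt L w * f w v)"
    unfolding cnt_def using supp_cnt[of L, unfolded cnt_def]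
    by (intro sum.mono_neutral_right) (auto simp: supp_def)
  finally show "lin f (cnt L) v = sum_list (map (\<lambda>w. f w v) L)"
    by (simp add: lin_def)
qed

lemma sum_cnt_concat: "sum_list (map (\<lambda>w. cnt (G w) v) L) = cnt (concat (map G L)) v"
  by (induction L) (auto simp: cnt_append cnt_Nil)

lemma lin_cnt_cnt: "lin (\<lambda>w. cnt (G w)) (cnt L) = cnt (concat (map G L))"
  by (auto simp: lin_cnt sum_cnt_concat)

lemma cnt_mod2: "count_list A w mod 2 = count_list B w mod 2 \<Longrightarrow> cnt A w = cnt B w"
  by (simp add: cnt_def of_nat_bit odd_iff_mod_2_eq_one)



definition oddS :: "nat \<Rightarrow> nat list" where
  "oddS t = (if t = 0 then [0] else filter (\<lambda>s. odd (s choose (t - s))) [1..<Suc t])"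

fun sqAll :: "nat list \<Rightarrow> nat list list" where
  "sqAll [] = [[]]"
| "sqAll (t # ts) = concat (map (\<lambda>s. map (Cons s) (sqAll ts)) (oddS t))"

fun phiL :: "nat \<Rightarrow> nat list \<Rightarrow> nat list list" where
  "phiL 0 ts = (if ts = [] then [[]] else [])"
| "phiL (Suc k) [] = []"
| "phiL (Suc k) (t # us) = concat (map (\<lambda>v. map (Cons (t + sum_list us - sum_list v)) (phiL k v)) (sqAll us))"

fun lle :: "nat list \<Rightarrow> nat list \<Rightarrow> bool" where
  "lle [] _ = True"
| "lle (a # as) [] = False"
| "lle (a # as) (b # bs) = (a < b \<or> (a = b \<and> lle as bs))"

fun ins :: "nat list \<Rightarrow> nat list list \<Rightarrow> nat list list" where
  "ins x [] = [x]"
| "ins x (y # ys) = (if x = y then ys else if lle x y then x # y # ys else y # ins x ys)"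

definition sqL :: "nat \<Rightarrow> nat list \<Rightarrow> nat list list" where
  "sqL j m = filter (\<lambda>v. sum_list m = sum_list v + j) (sqAll m)"

fun run :: "(nat list \<Rightarrow> nat list list) \<Rightarrow> nat list list \<Rightarrow> nat list list \<Rightarrow> nat list list" where
  "run F [] A = A"
| "run F (m # ms) A = run F ms (foldr ins (F m) A)"

lemma cnt_Cons: "cnt (y # ys) w = (if y = w then 1 else 0) + cnt ys w"
  by (simp add: cnt_def)

lemma bit_self_add: "(a::bit) + a = 0"
  by (cases a) simp_all

lemma cnt_ins: "cnt (ins x A) w = cnt [x] w + cnt A w"
proof (induction A)
  case Nil
  then show ?case by (simp add: cnt_Nil)
next
  case (Cons y ys)
  show ?case
  proof (cases "x = y")
    case True
    then show ?thesis
      by (simp add: cnt_Cons cnt_Nil add.assoc[symmetric] bit_self_add)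
  next
    case False
    then show ?thesis using Cons
      by (auto simp add: cnt_Cons cnt_Nil ac_simps)
  qed
qed

lemma cnt_foldr_ins: "cnt (foldr ins L A) w = cnt L w + cnt A w"
proof (induction L)
  case Nil
  then show ?case by (simp add: cnt_Nil)
next
  case (Cons a L)
  then show ?case
    by (simp add: cnt_ins cnt_Cons cnt_Nil ac_simps)
qed

lemma cnt_run: "cnt (run F ms A) w = cnt (concat (map F ms)) w + cnt A w"
proof (induction ms arbitrary: A)
  case Nil
  then show ?case by (simp add: cnt_Nil)
next
  case (Cons m ms)
  then show ?case
    by (simp add: cnt_foldr_ins cnt_append ac_simps)
qed

lemma count_map_Cons: "count_list (map (Cons s') L) (s # vs) = (if s' = s then count_list L vs else 0)"
  by (induction L) auto

lemma count_map_Cons_Nil: "count_list (map (Cons s') L) [] = 0"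
  by (induction L) auto

lemma count_concat_Cons:
  "count_list (concat (map (\<lambda>s'. map (Cons s') (B s')) S)) (s # vs) = count_list S s * count_list (B s) vs"
  by (induction S) (auto simp: count_map_Cons)

lemma count_concat_Cons_Nil:
  "count_list (concat (map (\<lambda>s'. map (Cons s') (B s')) S)) [] = 0"
  by (induction S) (auto simp: count_map_Cons_Nil)

lemma count_concat_Cons_f:
  "count_list (concat (map (\<lambda>v. map (Cons (f v)) (G v)) L)) (i # w') =
   count_list (concat (map G (filter (\<lambda>v. f v = i) L))) w'"
  by (induction L) (auto simp: count_map_Cons)

lemma count_concat_Cons_f_Nil:
  "count_list (concat (map (\<lambda>v. map (Cons (f v)) (G v)) L)) [] = 0"
  by (induction L) (auto simp: count_map_Cons_Nil)

lemma filter_concat_map_Cons: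
  "filter P (concat (map (\<lambda>s'. map (Cons s') A) S)) =
   concat (map (\<lambda>s'. map (Cons s') (filter (\<lambda>v. P (s' # v)) A)) S)"
  by (induction S) (auto simp: filter_map o_def)

lemma count_distinct: "distinct xs \<Longrightarrow> count_list xs x = (if x \<in> set xs then 1 else 0)"
  by (induction xs) auto

lemma oddS_set: "s \<in> set (oddS t) \<longleftrightarrow> s \<le> t \<and> odd (s choose (t - s))"
proof (cases "t = 0")
  case True
  then show ?thesis by (auto simp: oddS_def)
next
  case False
  have "odd (s choose (t - s)) \<Longrightarrow> 1 \<le> s" using False by (cases s) (auto simp: binomial_eq_0)
  then show ?thesis using False by (auto simp: oddS_def)
qed

lemma oddS_distinct: "distinct (oddS t)"
  by (simp add: oddS_def)

lemma sqAll_sum: "v \<in> set (sqAll ts) \<Longrightarrow> sum_list v \<le> sum_list ts"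
proof (induction ts arbitrary: v)
  case Nil
  then show ?case by simp
next
  case (Cons t ts)
  then obtain s vs where v: "v = s # vs" "s \<in> set (oddS t)" "vs \<in> set (sqAll ts)" by auto
  then have "s \<le> t" by (simp add: oddS_set)
  with Cons.IH[OF v(3)] v(1) show ?case by simp
qed

lemma sqm_eq: "sqm j ts v = cnt (sqL j ts) v"
proof (induction ts arbitrary: j v)
  case Nil
  then show ?case by (auto simp: sqL_def cnt_def)
next
  case (Cons t ts)
  show ?case
  proof (cases v)
    case Nil
    then show ?thesis
      by (simp add: sqL_def cnt_def filter_concat_map_Cons count_concat_Cons_Nil)
  next
    case (Cons s vs)
    let ?P = "\<lambda>v. t + sum_list ts = s + sum_list v + j"
    have rhs: "cnt (sqL j (t # ts)) v = of_nat (count_list (oddS t) s * count_list (filter ?P (sqAll ts)) vs)"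
      unfolding sqL_def cnt_def Cons by (simp add: filter_concat_map_Cons count_concat_Cons add.assoc)
    show ?thesis
    proof (cases "s \<le> t \<and> t - s \<le> j")
      case True
      have feq: "filter ?P (sqAll ts) = filter (\<lambda>v. sum_list ts = sum_list v + (j - (t - s))) (sqAll ts)"
        by (rule filter_cong) (use True in auto)
      have "sqm j (t # ts) v = of_nat (s choose (t - s)) * sqm (j - (t - s)) ts vs"
        using True Cons by simp
      also have "\<dots> = of_nat (s choose (t - s)) * cnt (filter ?P (sqAll ts)) vs"
        using Cons.IH[of "j - (t - s)" vs] feq by (simp add: sqL_def)
      also have "\<dots> = cnt (sqL j (t # ts)) v"
        using True unfolding rhs
        by (simp add: count_distinct[OF oddS_distinct] oddS_set cnt_def of_nat_bit)
      finally show ?thesis .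
    next
      case False
      have "sqm j (t # ts) v = 0" using False Cons by auto
      moreover have "count_list (oddS t) s * count_list (filter ?P (sqAll ts)) vs = 0"
      proof (cases "s \<le> t")
        case True
        with False have "j < t - s" by simp
        have "vs \<notin> set (filter ?P (sqAll ts))"
        proof
          assume "vs \<in> set (filter ?P (sqAll ts))"
          then have "vs \<in> set (sqAll ts)" "?P vs" by auto
          with sqAll_sum[of vs ts] \<open>j < t - s\<close> True show False by simp
        qed
        then show ?thesis by (simp add: count_list_0_iff)
      next
        case False
        then have "s \<notin> set (oddS t)" by (simp add: oddS_set)
        then show ?thesis by (simp add: count_list_0_iff)
      qed
      ultimately show ?thesis using rhs by (metis of_nat_0)
    qed
  qed
qed

lemma phi_eq: "phi k ts w = cnt (phiL k ts) w"
proof (induction k arbitrary: ts w)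
  case 0
  then show ?case by (auto simp: cnt_def)
next
  case (Suc k)
  show ?case
  proof (cases ts)
    case Nil
    then show ?thesis by (simp add: cnt_Nil)
  next
    case (Cons t us)
    note ts = this
    show ?thesis
    proof (cases w)
      case Nil
      then show ?thesis using ts by (simp add: cnt_def count_concat_Cons_f_Nil)
    next
      case (Cons i w')
      note ww = this
      let ?f = "\<lambda>v. t + sum_list us - sum_list v"
      have rhs: "cnt (phiL (Suc k) ts) w = cnt (concat (map (phiL k) (filter (\<lambda>v. ?f v = i) (sqAll us)))) w'"
        unfolding cnt_def ts ww by (simp add: count_concat_Cons_f)
      have phik: "phi k = (\<lambda>v. cnt (phiL k v))" using Suc.IH by auto
      have sqmf: "sqm j us = cnt (sqL j us)" for j using sqm_eq by auto
      show ?thesis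
      proof (cases "t \<le> i")
        case True
        have "phi (Suc k) ts w = lin (\<lambda>v. cnt (phiL k v)) (cnt (sqL (i - t) us)) w'"
          using True ts ww phik sqmf by simp
        also have "\<dots> = cnt (concat (map (phiL k) (sqL (i - t) us))) w'"
          by (simp add: lin_cnt_cnt)
        also have "sqL (i - t) us = filter (\<lambda>v. ?f v = i) (sqAll us)"
          unfolding sqL_def by (rule filter_cong) (use True sqAll_sum in force)+
        finally show ?thesis using rhs by simp
      next
        case False
        have "filter (\<lambda>v. ?f v = i) (sqAll us) = []"
        proof -
          have "\<not> ?f v = i" if "v \<in> set (sqAll us)" for v
          proof -
            have "sum_list v \<le> sum_list us" using that by (rule sqAll_sum)
            then show ?thesis using False by arith
          qed
          then show ?thesis by (auto simp: filter_empty_conv)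
        qed
        then show ?thesis using False ts ww rhs by (simp add: cnt_Nil)
      qed
    qed
  qed
qed



lemma chooseP: "0 < n \<Longrightarrow> 0 < k \<Longrightarrow> (n::nat) choose k = ((n - 1) choose (k - 1)) + ((n - 1) choose k)"
  by (cases n; cases k) auto

lemma c_2_1: "(2::nat) choose 1 = 2"
  using chooseP[of 2 1]  by simp
lemma c_3_1: "(3::nat) choose 1 = 3"
  using chooseP[of 3 1] c_2_1 by simp
lemma c_3_2: "(3::nat) choose 2 = 3"
  using chooseP[of 3 2] c_2_1 by simp
lemma c_4_1: "(4::nat) choose 1 = 4"
  using chooseP[of 4 1] c_3_1 by simp
lemma c_4_2: "(4::nat) choose 2 = 6"
  using chooseP[of 4 2] c_3_1 c_3_2 by simp
lemma c_4_3: "(4::nat) choose 3 = 4"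
  using chooseP[of 4 3] c_3_2 by simp
lemma c_5_1: "(5::nat) choose 1 = 5"
  using chooseP[of 5 1] c_4_1 by simp
lemma c_5_2: "(5::nat) choose 2 = 10"
  using chooseP[of 5 2] c_4_1 c_4_2 by simp
lemma c_5_3: "(5::nat) choose 3 = 10"
  using chooseP[of 5 3] c_4_2 c_4_3 by simp
lemma c_5_4: "(5::nat) choose 4 = 5"
  using chooseP[of 5 4] c_4_3 by simp
lemma c_6_1: "(6::nat) choose 1 = 6"
  using chooseP[of 6 1] c_5_1 by simp
lemma c_6_2: "(6::nat) choose 2 = 15"
  using chooseP[of 6 2] c_5_1 c_5_2 by simp
lemma c_6_3: "(6::nat) choose 3 = 20"
  using chooseP[of 6 3] c_5_2 c_5_3 by simp
lemma c_6_4: "(6::nat) choose 4 = 15"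
  using chooseP[of 6 4] c_5_3 c_5_4 by simp
lemma c_6_5: "(6::nat) choose 5 = 6"
  using chooseP[of 6 5] c_5_4 by simp
lemma c_7_1: "(7::nat) choose 1 = 7"
  using chooseP[of 7 1] c_6_1 by simp
lemma c_7_2: "(7::nat) choose 2 = 21"
  using chooseP[of 7 2] c_6_1 c_6_2 by simp
lemma c_7_3: "(7::nat) choose 3 = 35"
  using chooseP[of 7 3] c_6_2 c_6_3 by simp
lemma c_7_4: "(7::nat) choose 4 = 35"
  using chooseP[of 7 4] c_6_3 c_6_4 by simp
lemma c_7_5: "(7::nat) choose 5 = 21"
  using chooseP[of 7 5] c_6_4 c_6_5 by simp
lemma c_7_6: "(7::nat) choose 6 = 7"
  using chooseP[of 7 6] c_6_5 by simp
lemma c_8_1: "(8::nat) choose 1 = 8"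
  using chooseP[of 8 1] c_7_1 by simp
lemma c_8_2: "(8::nat) choose 2 = 28"
  using chooseP[of 8 2] c_7_1 c_7_2 by simp
lemma c_8_3: "(8::nat) choose 3 = 56"
  using chooseP[of 8 3] c_7_2 c_7_3 by simp
lemma c_8_4: "(8::nat) choose 4 = 70"
  using chooseP[of 8 4] c_7_3 c_7_4 by simp
lemma c_8_5: "(8::nat) choose 5 = 56"
  using chooseP[of 8 5] c_7_4 c_7_5 by simp
lemma c_8_6: "(8::nat) choose 6 = 28"
  using chooseP[of 8 6] c_7_5 c_7_6 by simp
lemma c_8_7: "(8::nat) choose 7 = 8"
  using chooseP[of 8 7] c_7_6 by simp
lemma c_9_1: "(9::nat) choose 1 = 9"
  using chooseP[of 9 1] c_8_1 by simp
lemma c_9_2: "(9::nat) choose 2 = 36"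
  using chooseP[of 9 2] c_8_1 c_8_2 by simp
lemma c_9_3: "(9::nat) choose 3 = 84"
  using chooseP[of 9 3] c_8_2 c_8_3 by simp
lemma c_9_4: "(9::nat) choose 4 = 126"
  using chooseP[of 9 4] c_8_3 c_8_4 by simp
lemma c_9_5: "(9::nat) choose 5 = 126"
  using chooseP[of 9 5] c_8_4 c_8_5 by simp
lemma c_9_6: "(9::nat) choose 6 = 84"
  using chooseP[of 9 6] c_8_5 c_8_6 by simp
lemma c_9_7: "(9::nat) choose 7 = 36"
  using chooseP[of 9 7] c_8_6 c_8_7 by simp
lemma c_9_8: "(9::nat) choose 8 = 9"
  using chooseP[of 9 8] c_8_7 by simp
lemma c_10_1: "(10::nat) choose 1 = 10"
  using chooseP[of 10 1] c_9_1 by simp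
lemma c_10_2: "(10::nat) choose 2 = 45"
  using chooseP[of 10 2] c_9_1 c_9_2 by simp
lemma c_10_3: "(10::nat) choose 3 = 120"
  using chooseP[of 10 3] c_9_2 c_9_3 by simp
lemma c_10_4: "(10::nat) choose 4 = 210"
  using chooseP[of 10 4] c_9_3 c_9_4 by simp
lemma c_10_5: "(10::nat) choose 5 = 252"
  using chooseP[of 10 5] c_9_4 c_9_5 by simp
lemma c_10_6: "(10::nat) choose 6 = 210"
  using chooseP[of 10 6] c_9_5 c_9_6 by simp
lemma c_10_7: "(10::nat) choose 7 = 120"
  using chooseP[of 10 7] c_9_6 c_9_7 by simp
lemma c_10_8: "(10::nat) choose 8 = 45"
  using chooseP[of 10 8] c_9_7 c_9_8 by simp
lemma c_10_9: "(10::nat) choose 9 = 10"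
  using chooseP[of 10 9] c_9_8 by simp
lemma c_11_1: "(11::nat) choose 1 = 11"
  using chooseP[of 11 1] c_10_1 by simp
lemma c_11_2: "(11::nat) choose 2 = 55"
  using chooseP[of 11 2] c_10_1 c_10_2 by simp
lemma c_11_3: "(11::nat) choose 3 = 165"
  using chooseP[of 11 3] c_10_2 c_10_3 by simp
lemma c_11_4: "(11::nat) choose 4 = 330"
  using chooseP[of 11 4] c_10_3 c_10_4 by simp
lemma c_11_5: "(11::nat) choose 5 = 462"
  using chooseP[of 11 5] c_10_4 c_10_5 by simp
lemma c_11_6: "(11::nat) choose 6 = 462"
  using chooseP[of 11 6] c_10_5 c_10_6 by simp
lemma c_11_7: "(11::nat) choose 7 = 330"
  using chooseP[of 11 7] c_10_6 c_10_7 by simp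
lemma c_11_8: "(11::nat) choose 8 = 165"
  using chooseP[of 11 8] c_10_7 c_10_8 by simp
lemma c_11_9: "(11::nat) choose 9 = 55"
  using chooseP[of 11 9] c_10_8 c_10_9 by simp
lemma c_11_10: "(11::nat) choose 10 = 11"
  using chooseP[of 11 10] c_10_9 by simp
lemma c_12_1: "(12::nat) choose 1 = 12"
  using chooseP[of 12 1] c_11_1 by simp
lemma c_12_2: "(12::nat) choose 2 = 66"
  using chooseP[of 12 2] c_11_1 c_11_2 by simp
lemma c_12_3: "(12::nat) choose 3 = 220"
  using chooseP[of 12 3] c_11_2 c_11_3 by simp
lemma c_12_4: "(12::nat) choose 4 = 495"
  using chooseP[of 12 4] c_11_3 c_11_4 by simp
lemma c_12_5: "(12::nat) choose 5 = 792"
  using chooseP[of 12 5] c_11_4 c_11_5 by simp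
lemma c_12_6: "(12::nat) choose 6 = 924"
  using chooseP[of 12 6] c_11_5 c_11_6 by simp
lemma c_12_7: "(12::nat) choose 7 = 792"
  using chooseP[of 12 7] c_11_6 c_11_7 by simp
lemma c_12_8: "(12::nat) choose 8 = 495"
  using chooseP[of 12 8] c_11_7 c_11_8 by simp
lemma c_12_9: "(12::nat) choose 9 = 220"
  using chooseP[of 12 9] c_11_8 c_11_9 by simp
lemma c_12_10: "(12::nat) choose 10 = 66"
  using chooseP[of 12 10] c_11_9 c_11_10 by simp
lemma c_12_11: "(12::nat) choose 11 = 12"
  using chooseP[of 12 11] c_11_10 by simp
lemma c_13_1: "(13::nat) choose 1 = 13"
  using chooseP[of 13 1] c_12_1 by simp
lemma c_13_2: "(13::nat) choose 2 = 78"
  using chooseP[of 13 2] c_12_1 c_12_2 by simp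
lemma c_13_3: "(13::nat) choose 3 = 286"
  using chooseP[of 13 3] c_12_2 c_12_3 by simp
lemma c_13_4: "(13::nat) choose 4 = 715"
  using chooseP[of 13 4] c_12_3 c_12_4 by simp
lemma c_13_5: "(13::nat) choose 5 = 1287"
  using chooseP[of 13 5] c_12_4 c_12_5 by simp
lemma c_13_6: "(13::nat) choose 6 = 1716"
  using chooseP[of 13 6] c_12_5 c_12_6 by simp
lemma c_13_7: "(13::nat) choose 7 = 1716"
  using chooseP[of 13 7] c_12_6 c_12_7 by simp
lemma c_13_8: "(13::nat) choose 8 = 1287"
  using chooseP[of 13 8] c_12_7 c_12_8 by simp
lemma c_13_9: "(13::nat) choose 9 = 715"
  using chooseP[of 13 9] c_12_8 c_12_9 by simp
lemma c_13_10: "(13::nat) choose 10 = 286"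
  using chooseP[of 13 10] c_12_9 c_12_10 by simp
lemma c_13_11: "(13::nat) choose 11 = 78"
  using chooseP[of 13 11] c_12_10 c_12_11 by simp
lemma c_13_12: "(13::nat) choose 12 = 13"
  using chooseP[of 13 12] c_12_11 by simp
lemma c_14_1: "(14::nat) choose 1 = 14"
  using chooseP[of 14 1] c_13_1 by simp
lemma c_14_2: "(14::nat) choose 2 = 91"
  using chooseP[of 14 2] c_13_1 c_13_2 by simp
lemma c_14_3: "(14::nat) choose 3 = 364"
  using chooseP[of 14 3] c_13_2 c_13_3 by simp
lemma c_14_4: "(14::nat) choose 4 = 1001"
  using chooseP[of 14 4] c_13_3 c_13_4 by simp
lemma c_14_5: "(14::nat) choose 5 = 2002"
  using chooseP[of 14 5] c_13_4 c_13_5 by simp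
lemma c_14_6: "(14::nat) choose 6 = 3003"
  using chooseP[of 14 6] c_13_5 c_13_6 by simp
lemma c_14_7: "(14::nat) choose 7 = 3432"
  using chooseP[of 14 7] c_13_6 c_13_7 by simp
lemma c_14_8: "(14::nat) choose 8 = 3003"
  using chooseP[of 14 8] c_13_7 c_13_8 by simp
lemma c_14_9: "(14::nat) choose 9 = 2002"
  using chooseP[of 14 9] c_13_8 c_13_9 by simp
lemma c_14_10: "(14::nat) choose 10 = 1001"
  using chooseP[of 14 10] c_13_9 c_13_10 by simp
lemma c_14_11: "(14::nat) choose 11 = 364"
  using chooseP[of 14 11] c_13_10 c_13_11 by simp
lemma c_14_12: "(14::nat) choose 12 = 91"
  using chooseP[of 14 12] c_13_11 c_13_12 by simp
lemma c_14_13: "(14::nat) choose 13 = 14"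
  using chooseP[of 14 13] c_13_12 by simp
lemmas choose_tab = c_2_1 c_3_1 c_3_2 c_4_1 c_4_2 c_4_3 c_5_1 c_5_2 c_5_3 c_5_4 c_6_1 c_6_2 c_6_3 c_6_4 c_6_5 c_7_1 c_7_2 c_7_3 c_7_4 c_7_5 c_7_6 c_8_1 c_8_2 c_8_3 c_8_4 c_8_5 c_8_6 c_8_7 c_9_1 c_9_2 c_9_3 c_9_4 c_9_5 c_9_6 c_9_7 c_9_8 c_10_1 c_10_2 c_10_3 c_10_4 c_10_5 c_10_6 c_10_7 c_10_8 c_10_9 c_11_1 c_11_2 c_11_3 c_11_4 c_11_5 c_11_6 c_11_7 c_11_8 c_11_9 c_11_10 c_12_1 c_12_2 c_12_3 c_12_4 c_12_5 c_12_6 c_12_7 c_12_8 c_12_9 c_12_10 c_12_11 c_13_1 c_13_2 c_13_3 c_13_4 c_13_5 c_13_6 c_13_7 c_13_8 c_13_9 c_13_10 c_13_11 c_13_12 c_14_1 c_14_2 c_14_3 c_14_4 c_14_5 c_14_6 c_14_7 c_14_8 c_14_9 c_14_10 c_14_11 c_14_12 c_14_13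

lemma upt_1: "[1..<Suc 1] = ([1] :: nat list)"
  by (simp add: upt_rec numeral_eq_Suc)
lemma upt_2: "[1..<Suc 2] = ([1, 2] :: nat list)"
  by (simp add: upt_rec numeral_eq_Suc)
lemma upt_3: "[1..<Suc 3] = ([1, 2, 3] :: nat list)"
  by (simp add: upt_rec numeral_eq_Suc)
lemma upt_4: "[1..<Suc 4] = ([1, 2, 3, 4] :: nat list)"
  by (simp add: upt_rec numeral_eq_Suc)
lemma upt_5: "[1..<Suc 5] = ([1, 2, 3, 4, 5] :: nat list)"
  by (simp add: upt_rec numeral_eq_Suc)
lemma upt_6: "[1..<Suc 6] = ([1, 2, 3, 4, 5, 6] :: nat list)"
  by (simp add: upt_rec numeral_eq_Suc)
lemma upt_7: "[1..<Suc 7] = ([1, 2, 3, 4, 5, 6, 7] :: nat list)"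
  by (simp add: upt_rec numeral_eq_Suc)
lemma upt_8: "[1..<Suc 8] = ([1, 2, 3, 4, 5, 6, 7, 8] :: nat list)"
  by (simp add: upt_rec numeral_eq_Suc)
lemma upt_9: "[1..<Suc 9] = ([1, 2, 3, 4, 5, 6, 7, 8, 9] :: nat list)"
  by (simp add: upt_rec numeral_eq_Suc)
lemma upt_10: "[1..<Suc 10] = ([1, 2, 3, 4, 5, 6, 7, 8, 9, 10] :: nat list)"
  by (simp add: upt_rec numeral_eq_Suc)
lemma upt_11: "[1..<Suc 11] = ([1, 2, 3, 4, 5, 6, 7, 8, 9, 10, 11] :: nat list)"
  by (simp add: upt_rec numeral_eq_Suc)
lemma upt_12: "[1..<Suc 12] = ([1, 2, 3, 4, 5, 6, 7, 8, 9, 10, 11, 12] :: nat list)"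
  by (simp add: upt_rec numeral_eq_Suc)
lemma upt_13: "[1..<Suc 13] = ([1, 2, 3, 4, 5, 6, 7, 8, 9, 10, 11, 12, 13] :: nat list)"
  by (simp add: upt_rec numeral_eq_Suc)
lemma upt_14: "[1..<Suc 14] = ([1, 2, 3, 4, 5, 6, 7, 8, 9, 10, 11, 12, 13, 14] :: nat list)"
  by (simp add: upt_rec numeral_eq_Suc)
lemmas upt_tab = upt_1 upt_2 upt_3 upt_4 upt_5 upt_6 upt_7 upt_8 upt_9 upt_10 upt_11 upt_12 upt_13 upt_14

lemma oddS_0: "oddS 0 = [0]"
  unfolding oddS_def  by (simp add: choose_tab binomial_eq_0)
lemma oddS_1: "oddS 1 = [1]"
  unfolding oddS_def upt_1 by (simp add: choose_tab binomial_eq_0)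
lemma oddS_2: "oddS 2 = [1, 2]"
  unfolding oddS_def upt_2 by (simp add: choose_tab binomial_eq_0)
lemma oddS_3: "oddS 3 = [3]"
  unfolding oddS_def upt_3 by (simp add: choose_tab binomial_eq_0)
lemma oddS_4: "oddS 4 = [2, 3, 4]"
  unfolding oddS_def upt_4 by (simp add: choose_tab binomial_eq_0)
lemma oddS_5: "oddS 5 = [3, 5]"
  unfolding oddS_def upt_5 by (simp add: choose_tab binomial_eq_0)
lemma oddS_6: "oddS 6 = [3, 5, 6]"
  unfolding oddS_def upt_6 by (simp add: choose_tab binomial_eq_0)
lemma oddS_7: "oddS 7 = [7]"
  unfolding oddS_def upt_7 by (simp add: choose_tab binomial_eq_0)
lemma oddS_8: "oddS 8 = [4, 6, 7, 8]"
  unfolding oddS_def upt_8 by (simp add: choose_tab binomial_eq_0)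
lemma oddS_9: "oddS 9 = [5, 7, 9]"
  unfolding oddS_def upt_9 by (simp add: choose_tab binomial_eq_0)
lemma oddS_10: "oddS 10 = [5, 6, 7, 9, 10]"
  unfolding oddS_def upt_10 by (simp add: choose_tab binomial_eq_0)
lemma oddS_11: "oddS 11 = [7, 11]"
  unfolding oddS_def upt_11 by (simp add: choose_tab binomial_eq_0)
lemma oddS_12: "oddS 12 = [6, 7, 10, 11, 12]"
  unfolding oddS_def upt_12 by (simp add: choose_tab binomial_eq_0)
lemma oddS_13: "oddS 13 = [7, 11, 13]"
  unfolding oddS_def upt_13 by (simp add: choose_tab binomial_eq_0)
lemma oddS_14: "oddS 14 = [7, 11, 13, 14]"
  unfolding oddS_def upt_14 by (simp add: choose_tab binomial_eq_0)
lemmas oddS_tab = oddS_0 oddS_1 oddS_2 oddS_3 oddS_4 oddS_5 oddS_6 oddS_7 oddS_8 oddS_9 oddS_10 oddS_11 oddS_12 oddS_13 oddS_14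



fun insB :: "nat list \<Rightarrow> (nat \<times> nat list list) list \<Rightarrow> (nat \<times> nat list list) list" where
  "insB x [] = [(hd x, [x])]"
| "insB x ((k, b) # bs) = (if hd x = k then (k, ins x b) # bs else (k, b) # insB x bs)"

fun runB :: "(nat list \<Rightarrow> nat list list) \<Rightarrow> nat list list \<Rightarrow> (nat \<times> nat list list) list \<Rightarrow> (nat \<times> nat list list) list" where
  "runB F [] A = A"
| "runB F (m # ms) A = runB F ms (foldr insB (F m) A)"

lemma cnt_insB: "cnt (concat (map snd (insB x A))) w = cnt [x] w + cnt (concat (map snd A)) w"
proof (induction x A rule: insB.induct)
  case (1 x)
  then show ?case by (simp add: cnt_Nil)
next
  case (2 x k b bs)
  then show ?case by (auto simp: cnt_append cnt_ins ac_simps)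
qed

lemma cnt_foldr_insB: "cnt (concat (map snd (foldr insB L A))) w = cnt L w + cnt (concat (map snd A)) w"
proof (induction L)
  case Nil
  then show ?case by (simp add: cnt_Nil)
next
  case (Cons a L)
  then show ?case
    by (simp add: cnt_insB cnt_Cons cnt_Nil ac_simps)
qed

lemma cnt_runB: "cnt (concat (map snd (runB F ms A))) w = cnt (concat (map F ms)) w + cnt (concat (map snd A)) w"
proof (induction ms arbitrary: A)
  case Nil
  then show ?case by (simp add: cnt_Nil)
next
  case (Cons m ms)
  then show ?case
    by (simp add: cnt_foldr_insB cnt_append ac_simps)
qed

definition XL :: "nat list list" where "XL = [[7,7,5,14],[7,9,3,14],[11,5,3,14],[13,3,3,14],[7,7,6,13],[7,10,3,13],[11,6,3,13],[14,3,3,13],[7,9,6,11],[11,5,6,11],[13,3,6,11],[7,10,5,11],[11,6,5,11],[14,3,5,11],[7,7,9,10],[7,9,7,10],[11,5,7,10],[13,3,7,10],[7,11,5,10],[7,13,3,10],[7,7,10,9],[7,10,7,9],[11,6,7,9],[14,3,7,9],[7,11,6,9],[7,14,3,9],[7,9,10,7],[11,5,10,7],[13,3,10,7],[7,10,9,7],[11,6,9,7],[14,3,9,7],[7,13,6,7],[7,14,5,7],[7,7,13,6],[7,9,11,6],[11,5,11,6],[13,3,11,6],[11,7,9,6],[13,7,7,6],[11,11,5,6],[11,13,3,6],[7,7,14,5],[7,10,11,5],[11,6,11,5],[14,3,11,5],[11,7,10,5],[14,7,7,5],[11,11,6,5],[11,14,3,5],[7,9,14,3],[11,5,14,3],[1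3,3,14,3],[7,10,13,3],[11,6,13,3],[14,3,13,3],[13,7,10,3],[14,7,9,3],[13,11,6,3],[14,11,5,3],[13,14,3,3],[14,13,3,3]]"

lemma st0: "foldr insB (phiL (Suc (Suc (Suc (Suc 0)))) [7,7,5,14]) [] = [(7,[[7,7,5,14],[7,7,6,13],[7,7,8,11],[7,7,12,7],[7,8,5,13],[7,8,7,11],[7,8,11,7],[7,9,3,14],[7,9,4,13],[7,9,6,11],[7,9,10,7],[7,10,3,13],[7,12,3,11],[7,12,7,7],[7,14,5,7],[7,16,3,7]]),(8,[[8,7,5,13],[8,7,7,11],[8,7,11,7],[8,9,3,13],[8,11,3,11],[8,11,7,7],[8,13,5,7],[8,15,3,7]]),(10,[[10,7,3,13],[10,11,5,7]]),(14,[[14,7,5,7],[14,9,3,7]]),(9,[[9,7,3,14],[9,7,4,13],[9,7,6,11],[9,7,10,7],[9,8,3,13],[9,8,5,11],[9,8,9,7],[9,10,3,11],[9,10,7,7],[9,14,3,7]]),(12,[[12,7,3,11],[12,7,7,7],[12,11,3,7]]),(16,[[16,7,3,7]])]"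
  by (simp add: oddS_tab)
lemma st1: "foldr insB (phiL (Suc (Suc (Suc (Suc 0)))) [7,9,3,14]) [(7,[[7,7,5,14],[7,7,6,13],[7,7,8,11],[7,7,12,7],[7,8,5,13],[7,8,7,11],[7,8,11,7],[7,9,3,14],[7,9,4,13],[7,9,6,11],[7,9,10,7],[7,10,3,13],[7,12,3,11],[7,12,7,7],[7,14,5,7],[7,16,3,7]]),(8,[[8,7,5,13],[8,7,7,11],[8,7,11,7],[8,9,3,13],[8,11,3,11],[8,11,7,7],[8,13,5,7],[8,15,3,7]]),(10,[[10,7,3,13],[10,11,5,7]]),(14,[[14,7,5,7],[14,9,3,7]]),(9,[[9,7,3,14],[9,7,4,13],[9,7,6,11],[9,7,10,7],[9,8,3,13],[9,8,5,11],[9,8,9,7],[9,10,3,11],[9,10,7,7],[9,14,3,7]]),(12,[[12,7,3,11],[12,7,7,7],[12,11,3,7]]),(16,[[16,7,3,7]])] = [(7,[[7,7,5,14],[7,7,6,13],[7,7,8,11],[7,7,12,7],[7,8,5,13],[7,8,7,11],[7,8,11,7],[7,10,5,11],[7,10,9,7],[7,14,5,7]]),(8,[[8,7,5,13],[8,7,7,11],[8,7,11,7],[8,9,5,11],[8,9,9,7],[8,13,5,7]]),(10,[[10,7,5,11],[10,7,9,7],[10,11,5,7]]),(14,[[14,5,3,11],[14,5,7,7],[14,7,5,7],[14,9,3,7]]),(9,[]),(12,[[12,5,3,13],[12,5,5,11],[12,5,9,7],[12,7,3,11],[12,7,7,7],[12,11,3,7]]),(16,[]),(11,[[11,5,3,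14],[11,5,4,13],[11,5,6,11],[11,5,10,7],[11,6,3,13],[11,6,5,11],[11,6,9,7],[11,8,3,11],[11,8,7,7],[11,12,3,7]]),(18,[[18,5,3,7]])]"
  by (simp add: oddS_tab)
lemma st2: "foldr insB (phiL (Suc (Suc (Suc (Suc 0)))) [11,5,3,14]) [(7,[[7,7,5,14],[7,7,6,13],[7,7,8,11],[7,7,12,7],[7,8,5,13],[7,8,7,11],[7,8,11,7],[7,10,5,11],[7,10,9,7],[7,14,5,7]]),(8,[[8,7,5,13],[8,7,7,11],[8,7,11,7],[8,9,5,11],[8,9,9,7],[8,13,5,7]]),(10,[[10,7,5,11],[10,7,9,7],[10,11,5,7]]),(14,[[14,5,3,11],[14,5,7,7],[14,7,5,7],[14,9,3,7]]),(9,[]),(12,[[12,5,3,13],[12,5,5,11],[12,5,9,7],[12,7,3,11],[12,7,7,7],[12,11,3,7]]),(16,[]),(11,[[11,5,3,14],[11,5,4,13],[11,5,6,11],[11,5,10,7],[11,6,3,13],[11,6,5,11],[11,6,9,7],[11,8,3,11],[11,8,7,7],[11,12,3,7]]),(18,[[18,5,3,7]])] = [(7,[[7,7,5,14],[7,7,6,13],[7,7,8,11],[7,7,12,7],[7,8,5,13],[7,8,7,11],[7,8,11,7],[7,10,5,11],[7,10,9,7],[7,14,5,7]]),(8,[[8,7,5,13],[8,7,7,11],[8,7,11,7],[8,9,5,11],[8,9,9,7],[8,13,5,7]]),(10,[[10,7,5,11],[10,7,9,7],[10,11,5,7]]),(14,[[14,3,3,13],[14,3,5,11],[14,3,9,7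],[14,5,3,11],[14,5,7,7],[14,7,5,7],[14,9,3,7]]),(9,[]),(12,[]),(16,[[16,3,3,11],[16,3,7,7],[16,7,3,7]]),(11,[]),(18,[]),(13,[[13,3,3,14],[13,3,4,13],[13,3,6,11],[13,3,10,7],[13,4,3,13],[13,4,5,11],[13,4,9,7],[13,6,3,11],[13,6,7,7],[13,10,3,7]]),(20,[[20,3,3,7]])]"
  by (simp add: oddS_tab)
lemma st3: "foldr insB (phiL (Suc (Suc (Suc (Suc 0)))) [13,3,3,14]) [(7,[[7,7,5,14],[7,7,6,13],[7,7,8,11],[7,7,12,7],[7,8,5,13],[7,8,7,11],[7,8,11,7],[7,10,5,11],[7,10,9,7],[7,14,5,7]]),(8,[[8,7,5,13],[8,7,7,11],[8,7,11,7],[8,9,5,11],[8,9,9,7],[8,13,5,7]]),(10,[[10,7,5,11],[10,7,9,7],[10,11,5,7]]),(14,[[14,3,3,13],[14,3,5,11],[14,3,9,7],[14,5,3,11],[14,5,7,7],[14,7,5,7],[14,9,3,7]]),(9,[]),(12,[]),(16,[[16,3,3,11],[16,3,7,7],[16,7,3,7]]),(11,[]),(18,[]),(13,[[13,3,3,14],[13,3,4,13],[13,3,6,11],[13,3,10,7],[13,4,3,13],[13,4,5,11],[13,4,9,7],[13,6,3,11],[13,6,7,7],[13,10,3,7]]),(20,[[20,3,3,7]])] = [(7,[[7,7,5,14],[7,7,6,13],[7,7,8,11],[7,7,12,7],[7,8,5,13],[7,8,7,11],[7,8,11,7],[7,10,5,11],[7,10,9,7],[7,14,5,7]]),(8,[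[8,7,5,13],[8,7,7,11],[8,7,11,7],[8,9,5,11],[8,9,9,7],[8,13,5,7]]),(10,[[10,7,5,11],[10,7,9,7],[10,11,5,7]]),(14,[[14,7,5,7]]),(9,[]),(12,[]),(16,[]),(11,[]),(18,[]),(13,[]),(20,[])]"
  by (simp add: oddS_tab)
lemma st4: "foldr insB (phiL (Suc (Suc (Suc (Suc 0)))) [7,7,6,13]) [(7,[[7,7,5,14],[7,7,6,13],[7,7,8,11],[7,7,12,7],[7,8,5,13],[7,8,7,11],[7,8,11,7],[7,10,5,11],[7,10,9,7],[7,14,5,7]]),(8,[[8,7,5,13],[8,7,7,11],[8,7,11,7],[8,9,5,11],[8,9,9,7],[8,13,5,7]]),(10,[[10,7,5,11],[10,7,9,7],[10,11,5,7]]),(14,[[14,7,5,7]]),(9,[]),(12,[]),(16,[]),(11,[]),(18,[]),(13,[]),(20,[])] = [(7,[[7,7,5,14],[7,9,6,11],[7,9,10,7],[7,10,3,13],[7,10,5,11],[7,10,9,7],[7,12,3,11],[7,12,7,7],[7,13,6,7],[7,16,3,7]]),(8,[[8,9,3,13],[8,9,5,11],[8,9,9,7],[8,11,3,11],[8,11,7,7],[8,15,3,7]]),(10,[[10,7,3,13],[10,7,5,11],[10,7,9,7]]),(14,[[14,9,3,7]]),(9,[[9,7,6,11],[9,7,10,7],[9,8,5,11],[9,8,9,7],[9,10,3,11],[9,10,7,7],[9,11,6,7],[9,12,5,7],[9,14,3,7]]),(12,[[12,7,3,11],[12,7,7,7],[12,11,3,7]]),(16,[[16,7,3,7]]),(1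1,[]),(18,[]),(13,[[13,7,6,7],[13,8,5,7],[13,10,3,7]]),(20,[])]"
  by (simp add: oddS_tab)
lemma st5: "foldr insB (phiL (Suc (Suc (Suc (Suc 0)))) [7,10,3,13]) [(7,[[7,7,5,14],[7,9,6,11],[7,9,10,7],[7,10,3,13],[7,10,5,11],[7,10,9,7],[7,12,3,11],[7,12,7,7],[7,13,6,7],[7,16,3,7]]),(8,[[8,9,3,13],[8,9,5,11],[8,9,9,7],[8,11,3,11],[8,11,7,7],[8,15,3,7]]),(10,[[10,7,3,13],[10,7,5,11],[10,7,9,7]]),(14,[[14,9,3,7]]),(9,[[9,7,6,11],[9,7,10,7],[9,8,5,11],[9,8,9,7],[9,10,3,11],[9,10,7,7],[9,11,6,7],[9,12,5,7],[9,14,3,7]]),(12,[[12,7,3,11],[12,7,7,7],[12,11,3,7]]),(16,[[16,7,3,7]]),(11,[]),(18,[]),(13,[[13,7,6,7],[13,8,5,7],[13,10,3,7]]),(20,[])] = [(7,[[7,7,5,14],[7,9,6,11],[7,9,10,7],[7,13,6,7]]),(8,[]),(10,[]),(14,[[14,5,3,11],[14,5,7,7],[14,9,3,7]]),(9,[[9,7,6,11],[9,7,10,7],[9,8,5,11],[9,8,9,7],[9,11,6,7],[9,12,5,7]]),(12,[[12,5,3,13],[12,5,5,11],[12,5,9,7],[12,7,3,11],[12,7,7,7],[12,11,3,7]]),(16,[]),(11,[[11,6,3,13],[11,6,5,11],[11,6,9,7],[11,8,3,11],[11,8,7,7],[11,12,3,7]]),(18,[[18,5,3,7]]),(13,[[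13,6,3,11],[13,6,7,7],[13,7,6,7],[13,8,5,7],[13,10,3,7]]),(20,[]),(17,[[17,6,3,7]])]"
  by (simp add: oddS_tab)
lemma st6: "foldr insB (phiL (Suc (Suc (Suc (Suc 0)))) [11,6,3,13]) [(7,[[7,7,5,14],[7,9,6,11],[7,9,10,7],[7,13,6,7]]),(8,[]),(10,[]),(14,[[14,5,3,11],[14,5,7,7],[14,9,3,7]]),(9,[[9,7,6,11],[9,7,10,7],[9,8,5,11],[9,8,9,7],[9,11,6,7],[9,12,5,7]]),(12,[[12,5,3,13],[12,5,5,11],[12,5,9,7],[12,7,3,11],[12,7,7,7],[12,11,3,7]]),(16,[]),(11,[[11,6,3,13],[11,6,5,11],[11,6,9,7],[11,8,3,11],[11,8,7,7],[11,12,3,7]]),(18,[[18,5,3,7]]),(13,[[13,6,3,11],[13,6,7,7],[13,7,6,7],[13,8,5,7],[13,10,3,7]]),(20,[]),(17,[[17,6,3,7]])] = [(7,[[7,7,5,14],[7,9,6,11],[7,9,10,7],[7,13,6,7]]),(8,[]),(10,[]),(14,[[14,3,3,13],[14,3,5,11],[14,3,9,7],[14,5,3,11],[14,5,7,7],[14,9,3,7]]),(9,[[9,7,6,11],[9,7,10,7],[9,8,5,11],[9,8,9,7],[9,11,6,7],[9,12,5,7]]),(12,[]),(16,[[16,3,3,11],[16,3,7,7],[16,7,3,7]]),(11,[]),(18,[]),(13,[[13,7,6,7],[13,8,5,7]]),(20,[[20,3,3,7]]),(17,[])]"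
  by (simp add: oddS_tab)
lemma st7: "foldr insB (phiL (Suc (Suc (Suc (Suc 0)))) [14,3,3,13]) [(7,[[7,7,5,14],[7,9,6,11],[7,9,10,7],[7,13,6,7]]),(8,[]),(10,[]),(14,[[14,3,3,13],[14,3,5,11],[14,3,9,7],[14,5,3,11],[14,5,7,7],[14,9,3,7]]),(9,[[9,7,6,11],[9,7,10,7],[9,8,5,11],[9,8,9,7],[9,11,6,7],[9,12,5,7]]),(12,[]),(16,[[16,3,3,11],[16,3,7,7],[16,7,3,7]]),(11,[]),(18,[]),(13,[[13,7,6,7],[13,8,5,7]]),(20,[[20,3,3,7]]),(17,[])] = [(7,[[7,7,5,14],[7,9,6,11],[7,9,10,7],[7,13,6,7]]),(8,[]),(10,[]),(14,[]),(9,[[9,7,6,11],[9,7,10,7],[9,8,5,11],[9,8,9,7],[9,11,6,7],[9,12,5,7]]),(12,[]),(16,[]),(11,[]),(18,[]),(13,[[13,7,6,7],[13,8,5,7]]),(20,[]),(17,[])]"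
  by (simp add: oddS_tab)
lemma st8: "foldr insB (phiL (Suc (Suc (Suc (Suc 0)))) [7,9,6,11]) [(7,[[7,7,5,14],[7,9,6,11],[7,9,10,7],[7,13,6,7]]),(8,[]),(10,[]),(14,[]),(9,[[9,7,6,11],[9,7,10,7],[9,8,5,11],[9,8,9,7],[9,11,6,7],[9,12,5,7]]),(12,[]),(16,[]),(11,[]),(18,[]),(13,[[13,7,6,7],[13,8,5,7]]),(20,[]),(17,[])] = [(7,[[7,7,5,14],[7,10,5,11],[7,10,9,7],[7,12,3,11],[7,12,7,7],[7,14,5,7],[7,16,3,7]]),(8,[[8,9,5,11],[8,9,9,7],[8,11,3,11],[8,11,7,7],[8,13,5,7],[8,15,3,7]]),(10,[[10,7,5,11],[10,7,9,7],[10,11,5,7]]),(14,[[14,5,3,11],[14,5,7,7],[14,7,5,7],[14,9,3,7]]),(9,[[9,10,3,11],[9,10,7,7],[9,14,3,7]]),(12,[[12,5,5,11],[12,5,9,7],[12,11,3,7]]),(16,[[16,5,5,7]]),(11,[[11,5,6,11],[11,5,10,7],[11,6,5,11],[11,6,9,7],[11,8,3,11],[11,8,7,7]]),(18,[[18,5,3,7]]),(13,[[13,10,3,7]]),(20,[]),(17,[]),(15,[[15,5,6,7],[15,6,5,7],[15,8,3,7]])]"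
  by (simp add: oddS_tab)
lemma st9: "foldr insB (phiL (Suc (Suc (Suc (Suc 0)))) [11,5,6,11]) [(7,[[7,7,5,14],[7,10,5,11],[7,10,9,7],[7,12,3,11],[7,12,7,7],[7,14,5,7],[7,16,3,7]]),(8,[[8,9,5,11],[8,9,9,7],[8,11,3,11],[8,11,7,7],[8,13,5,7],[8,15,3,7]]),(10,[[10,7,5,11],[10,7,9,7],[10,11,5,7]]),(14,[[14,5,3,11],[14,5,7,7],[14,7,5,7],[14,9,3,7]]),(9,[[9,10,3,11],[9,10,7,7],[9,14,3,7]]),(12,[[12,5,5,11],[12,5,9,7],[12,11,3,7]]),(16,[[16,5,5,7]]),(11,[[11,5,6,11],[11,5,10,7],[11,6,5,11],[11,6,9,7],[11,8,3,11],[11,8,7,7]]),(18,[[18,5,3,7]]),(13,[[13,10,3,7]]),(20,[]),(17,[]),(15,[[15,5,6,7],[15,6,5,7],[15,8,3,7]])] = [(7,[[7,7,5,14],[7,10,5,11],[7,10,9,7],[7,12,3,11],[7,12,7,7],[7,14,5,7],[7,16,3,7]]),(8,[[8,9,5,11],[8,9,9,7],[8,11,3,11],[8,11,7,7],[8,13,5,7],[8,15,3,7]]),(10,[[10,7,5,11],[10,7,9,7],[10,11,5,7]]),(14,[[14,3,5,11],[14,3,9,7],[14,5,3,11],[14,5,7,7],[14,9,3,7]]),(9,[[9,10,3,11],[9,10,7,7],[9,14,3,7]]),(12,[[12,7,3,11],[12,7,7,7],[12,9,5,7]]),(16,[[16,3,3,11],[16,3,7,7]]),(11,[[11,9,6,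7],[11,10,5,7],[11,12,3,7]]),(18,[[18,3,5,7],[18,5,3,7]]),(13,[[13,3,6,11],[13,3,10,7],[13,4,5,11],[13,4,9,7],[13,6,3,11],[13,6,7,7],[13,7,6,7],[13,8,5,7]]),(20,[[20,3,3,7]]),(17,[[17,3,6,7],[17,4,5,7],[17,6,3,7]]),(15,[])]"
  by (simp add: oddS_tab)
lemma st10: "foldr insB (phiL (Suc (Suc (Suc (Suc 0)))) [13,3,6,11]) [(7,[[7,7,5,14],[7,10,5,11],[7,10,9,7],[7,12,3,11],[7,12,7,7],[7,14,5,7],[7,16,3,7]]),(8,[[8,9,5,11],[8,9,9,7],[8,11,3,11],[8,11,7,7],[8,13,5,7],[8,15,3,7]]),(10,[[10,7,5,11],[10,7,9,7],[10,11,5,7]]),(14,[[14,3,5,11],[14,3,9,7],[14,5,3,11],[14,5,7,7],[14,9,3,7]]),(9,[[9,10,3,11],[9,10,7,7],[9,14,3,7]]),(12,[[12,7,3,11],[12,7,7,7],[12,9,5,7]]),(16,[[16,3,3,11],[16,3,7,7]]),(11,[[11,9,6,7],[11,10,5,7],[11,12,3,7]]),(18,[[18,3,5,7],[18,5,3,7]]),(13,[[13,3,6,11],[13,3,10,7],[13,4,5,11],[13,4,9,7],[13,6,3,11],[13,6,7,7],[13,7,6,7],[13,8,5,7]]),(20,[[20,3,3,7]]),(17,[[17,3,6,7],[17,4,5,7],[17,6,3,7]]),(15,[])] = [(7,[[7,7,5,14],[7,10,5,11],[7,10,9,7],[7,12,3,11],[7,12,7,7],[7,14,5,7],[7,16,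3,7]]),(8,[[8,9,5,11],[8,9,9,7],[8,11,3,11],[8,11,7,7],[8,13,5,7],[8,15,3,7]]),(10,[[10,7,5,11],[10,7,9,7],[10,11,5,7]]),(14,[[14,7,5,7]]),(9,[[9,10,3,11],[9,10,7,7],[9,14,3,7]]),(12,[[12,7,3,11],[12,7,7,7],[12,9,5,7]]),(16,[[16,7,3,7]]),(11,[[11,9,6,7],[11,10,5,7],[11,12,3,7]]),(18,[]),(13,[[13,10,3,7]]),(20,[]),(17,[]),(15,[])]"
  by (simp add: oddS_tab)
lemma st11: "foldr insB (phiL (Suc (Suc (Suc (Suc 0)))) [7,10,5,11]) [(7,[[7,7,5,14],[7,10,5,11],[7,10,9,7],[7,12,3,11],[7,12,7,7],[7,14,5,7],[7,16,3,7]]),(8,[[8,9,5,11],[8,9,9,7],[8,11,3,11],[8,11,7,7],[8,13,5,7],[8,15,3,7]]),(10,[[10,7,5,11],[10,7,9,7],[10,11,5,7]]),(14,[[14,7,5,7]]),(9,[[9,10,3,11],[9,10,7,7],[9,14,3,7]]),(12,[[12,7,3,11],[12,7,7,7],[12,9,5,7]]),(16,[[16,7,3,7]]),(11,[[11,9,6,7],[11,10,5,7],[11,12,3,7]]),(18,[]),(13,[[13,10,3,7]]),(20,[]),(17,[]),(15,[])] = [(7,[[7,7,5,14]]),(8,[]),(10,[]),(14,[[14,5,3,11],[14,5,7,7],[14,9,3,7]]),(9,[]),(12,[[12,5,5,11],[12,5,9,7],[12,7,3,11],[12,7,7,7],[12,9,5,7],[12,11,3,7]]),(16,[[16,5,5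,7],[16,7,3,7]]),(11,[[11,6,5,11],[11,6,9,7],[11,8,3,11],[11,8,7,7],[11,9,6,7],[11,10,5,7],[11,12,3,7]]),(18,[[18,5,3,7]]),(13,[[13,6,3,11],[13,6,7,7],[13,10,3,7]]),(20,[]),(17,[[17,6,3,7]]),(15,[[15,6,5,7],[15,8,3,7]])]"
  by (simp add: oddS_tab)
lemma st12: "foldr insB (phiL (Suc (Suc (Suc (Suc 0)))) [11,6,5,11]) [(7,[[7,7,5,14]]),(8,[]),(10,[]),(14,[[14,5,3,11],[14,5,7,7],[14,9,3,7]]),(9,[]),(12,[[12,5,5,11],[12,5,9,7],[12,7,3,11],[12,7,7,7],[12,9,5,7],[12,11,3,7]]),(16,[[16,5,5,7],[16,7,3,7]]),(11,[[11,6,5,11],[11,6,9,7],[11,8,3,11],[11,8,7,7],[11,9,6,7],[11,10,5,7],[11,12,3,7]]),(18,[[18,5,3,7]]),(13,[[13,6,3,11],[13,6,7,7],[13,10,3,7]]),(20,[]),(17,[[17,6,3,7]]),(15,[[15,6,5,7],[15,8,3,7]])] = [(7,[[7,7,5,14]]),(8,[]),(10,[]),(14,[[14,3,5,11],[14,3,9,7],[14,5,3,11],[14,5,7,7],[14,7,5,7],[14,9,3,7]]),(9,[]),(12,[]),(16,[[16,3,3,11],[16,3,7,7],[16,7,3,7]]),(11,[[11,9,6,7]]),(18,[[18,3,5,7],[18,5,3,7]]),(13,[]),(20,[[20,3,3,7]]),(17,[]),(15,[])]"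
  by (simp add: oddS_tab)
lemma st13: "foldr insB (phiL (Suc (Suc (Suc (Suc 0)))) [14,3,5,11]) [(7,[[7,7,5,14]]),(8,[]),(10,[]),(14,[[14,3,5,11],[14,3,9,7],[14,5,3,11],[14,5,7,7],[14,7,5,7],[14,9,3,7]]),(9,[]),(12,[]),(16,[[16,3,3,11],[16,3,7,7],[16,7,3,7]]),(11,[[11,9,6,7]]),(18,[[18,3,5,7],[18,5,3,7]]),(13,[]),(20,[[20,3,3,7]]),(17,[]),(15,[])] = [(7,[[7,7,5,14]]),(8,[]),(10,[]),(14,[]),(9,[]),(12,[]),(16,[]),(11,[[11,9,6,7]]),(18,[]),(13,[]),(20,[]),(17,[]),(15,[])]"
  by (simp add: oddS_tab)
lemma st14: "foldr insB (phiL (Suc (Suc (Suc (Suc 0)))) [7,7,9,10]) [(7,[[7,7,5,14]]),(8,[]),(10,[]),(14,[]),(9,[]),(12,[]),(16,[]),(11,[[11,9,6,7]]),(18,[]),(13,[]),(20,[]),(17,[]),(15,[])] = [(7,[[7,7,5,14],[7,7,9,10],[7,7,10,9],[7,7,12,7],[7,7,13,6],[7,7,14,5],[7,8,9,9],[7,8,11,7],[7,8,13,5],[7,9,7,10],[7,9,8,9],[7,9,10,7],[7,9,11,6],[7,9,12,5],[7,10,7,9],[7,10,11,5],[7,11,5,10],[7,11,6,9],[7,11,8,7],[7,11,12,3],[7,12,5,9],[7,12,11,3],[7,13,7,6],[7,13,8,5],[7,13,10,3],[7,14,5,7],[7,14,7,5],[7,14,9,3],[7,15,5,6],[7,15,6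,5],[7,15,8,3],[7,16,5,5],[7,16,7,3]]),(8,[[8,7,9,9],[8,7,11,7],[8,7,13,5],[8,9,7,9],[8,9,11,5],[8,11,5,9],[8,11,11,3],[8,13,5,7],[8,13,7,5],[8,13,9,3],[8,15,5,5],[8,15,7,3]]),(10,[[10,7,7,9],[10,7,11,5],[10,11,5,7],[10,11,7,5],[10,11,9,3]]),(14,[[14,7,5,7],[14,7,7,5],[14,7,9,3],[14,9,3,7],[14,9,7,3]]),(9,[[9,7,7,10],[9,7,8,9],[9,7,10,7],[9,7,11,6],[9,7,12,5],[9,8,7,9],[9,8,9,7],[9,8,11,5],[9,10,7,7],[9,11,7,6],[9,11,8,5],[9,11,10,3],[9,12,7,5],[9,12,9,3]]),(12,[[12,7,5,9],[12,7,11,3],[12,9,3,9],[12,11,3,7],[12,11,7,3],[12,13,3,5]]),(16,[[16,7,5,5],[16,7,7,3],[16,9,3,5],[16,11,3,3]]),(11,[[11,7,5,10],[11,7,6,9],[11,7,8,7],[11,7,12,3],[11,8,5,9],[11,8,7,7],[11,8,11,3],[11,9,3,10],[11,9,4,9],[11,9,10,3],[11,10,3,9],[11,12,3,7],[11,12,7,3],[11,13,3,6],[11,13,4,5],[11,13,6,3],[11,14,3,5]]),(18,[]),(13,[[13,7,7,6],[13,7,8,5],[13,7,10,3],[13,8,7,5],[13,8,9,3],[13,10,7,3]]),(20,[]),(17,[]),(15,[[15,7,5,6],[15,7,6,5],[15,7,8,3],[15,8,5,5],[15,8,7,3],[15,9,3,6],[15,9,4,5],[15,9,6,3],[15,10,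3,5],[15,12,3,3]])]"
  by (simp add: oddS_tab)
lemma st15: "foldr insB (phiL (Suc (Suc (Suc (Suc 0)))) [7,9,7,10]) [(7,[[7,7,5,14],[7,7,9,10],[7,7,10,9],[7,7,12,7],[7,7,13,6],[7,7,14,5],[7,8,9,9],[7,8,11,7],[7,8,13,5],[7,9,7,10],[7,9,8,9],[7,9,10,7],[7,9,11,6],[7,9,12,5],[7,10,7,9],[7,10,11,5],[7,11,5,10],[7,11,6,9],[7,11,8,7],[7,11,12,3],[7,12,5,9],[7,12,11,3],[7,13,7,6],[7,13,8,5],[7,13,10,3],[7,14,5,7],[7,14,7,5],[7,14,9,3],[7,15,5,6],[7,15,6,5],[7,15,8,3],[7,16,5,5],[7,16,7,3]]),(8,[[8,7,9,9],[8,7,11,7],[8,7,13,5],[8,9,7,9],[8,9,11,5],[8,11,5,9],[8,11,11,3],[8,13,5,7],[8,13,7,5],[8,13,9,3],[8,15,5,5],[8,15,7,3]]),(10,[[10,7,7,9],[10,7,11,5],[10,11,5,7],[10,11,7,5],[10,11,9,3]]),(14,[[14,7,5,7],[14,7,7,5],[14,7,9,3],[14,9,3,7],[14,9,7,3]]),(9,[[9,7,7,10],[9,7,8,9],[9,7,10,7],[9,7,11,6],[9,7,12,5],[9,8,7,9],[9,8,9,7],[9,8,11,5],[9,10,7,7],[9,11,7,6],[9,11,8,5],[9,11,10,3],[9,12,7,5],[9,12,9,3]]),(12,[[12,7,5,9],[12,7,11,3],[12,9,3,9],[12,11,3,7],[12,11,7,3],[12,13,3,5]]),(16,[[16,7,5,5],[16,7,7,3],[16,9,3,5],[16,11,3,3]]),(11,[[11,7,5,10],[11,7,6,9],[11,7,8,7],[11,7,12,3],[11,8,5,9],[11,8,7,7],[11,8,11,3],[11,9,3,10],[11,9,4,9],[11,9,10,3],[11,10,3,9],[11,12,3,7],[11,12,7,3],[11,13,3,6],[11,13,4,5],[11,13,6,3],[11,14,3,5]]),(18,[]),(13,[[13,7,7,6],[13,7,8,5],[13,7,10,3],[13,8,7,5],[13,8,9,3],[13,10,7,3]]),(20,[]),(17,[]),(15,[[15,7,5,6],[15,7,6,5],[15,7,8,3],[15,8,5,5],[15,8,7,3],[15,9,3,6],[15,9,4,5],[15,9,6,3],[15,10,3,5],[15,12,3,3]])]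 = [(7,[[7,7,5,14],[7,7,9,10],[7,7,10,9],[7,7,12,7],[7,7,13,6],[7,7,14,5],[7,8,9,9],[7,8,11,7],[7,8,13,5],[7,10,9,7],[7,11,5,10],[7,11,6,9],[7,11,8,7],[7,11,12,3],[7,12,5,9],[7,12,7,7],[7,12,11,3],[7,14,5,7],[7,15,5,6],[7,15,6,5],[7,15,8,3],[7,16,5,5],[7,16,7,3]]),(8,[[8,7,9,9],[8,7,11,7],[8,7,13,5],[8,9,9,7],[8,11,5,9],[8,11,7,7],[8,11,11,3],[8,13,5,7],[8,15,5,5],[8,15,7,3]]),(10,[[10,7,9,7],[10,11,5,7]]),(14,[[14,5,7,7],[14,7,5,7],[14,9,3,7]]),(9,[]),(12,[[12,5,7,9],[12,5,9,7],[12,5,11,5],[12,7,5,9],[12,7,11,3],[12,9,3,9],[12,11,3,7],[12,13,3,5]]),(16,[[16,5,7,5],[16,5,9,3],[16,7,5,5],[16,9,3,5],[16,11,3,3]]),(11,[[11,5,7,10],[11,5,8,9],[11,5,10,7],[11,5,11,6],[11,5,12,5],[11,6,7,9],[11,6,9,7],[11,6,11,5],[11,7,5,10],[11,7,6,9],[11,7,8,7],[11,7,12,3],[11,8,5,9],[11,8,11,3],[11,9,3,10],[11,9,4,9],[11,9,10,3],[11,10,3,9],[11,12,3,7],[11,13,3,6],[11,13,4,5],[11,13,6,3],[11,14,3,5]]),(18,[]),(13,[]),(20,[]),(17,[]),(15,[[15,5,7,6],[15,5,8,5],[15,5,10,3],[15,6,7,5],[15,6,9,3],[15,7,5,6],[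15,7,6,5],[15,7,8,3],[15,8,5,5],[15,9,3,6],[15,9,4,5],[15,9,6,3],[15,10,3,5],[15,12,3,3]])]"
  by (simp add: oddS_tab)
lemma st16: "foldr insB (phiL (Suc (Suc (Suc (Suc 0)))) [11,5,7,10]) [(7,[[7,7,5,14],[7,7,9,10],[7,7,10,9],[7,7,12,7],[7,7,13,6],[7,7,14,5],[7,8,9,9],[7,8,11,7],[7,8,13,5],[7,10,9,7],[7,11,5,10],[7,11,6,9],[7,11,8,7],[7,11,12,3],[7,12,5,9],[7,12,7,7],[7,12,11,3],[7,14,5,7],[7,15,5,6],[7,15,6,5],[7,15,8,3],[7,16,5,5],[7,16,7,3]]),(8,[[8,7,9,9],[8,7,11,7],[8,7,13,5],[8,9,9,7],[8,11,5,9],[8,11,7,7],[8,11,11,3],[8,13,5,7],[8,15,5,5],[8,15,7,3]]),(10,[[10,7,9,7],[10,11,5,7]]),(14,[[14,5,7,7],[14,7,5,7],[14,9,3,7]]),(9,[]),(12,[[12,5,7,9],[12,5,9,7],[12,5,11,5],[12,7,5,9],[12,7,11,3],[12,9,3,9],[12,11,3,7],[12,13,3,5]]),(16,[[16,5,7,5],[16,5,9,3],[16,7,5,5],[16,9,3,5],[16,11,3,3]]),(11,[[11,5,7,10],[11,5,8,9],[11,5,10,7],[11,5,11,6],[11,5,12,5],[11,6,7,9],[11,6,9,7],[11,6,11,5],[11,7,5,10],[11,7,6,9],[11,7,8,7],[11,7,12,3],[11,8,5,9],[11,8,11,3],[11,9,3,10],[11,9,4,9],[11,9,10,3],[11,10,3,9],[11,12,3,7],[11,13,3,6],[11,13,4,5],[11,13,6,3],[11,14,3,5]]),(18,[]),(13,[]),(20,[]),(17,[]),(15,[[15,5,7,6],[15,5,8,5],[15,5,10,3],[15,6,7,5],[15,6,9,3],[15,7,5,6],[15,7,6,5],[15,7,8,3],[15,8,5,5],[15,9,3,6],[15,9,4,5],[15,9,6,3],[15,10,3,5],[15,12,3,3]])]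 = [(7,[[7,7,5,14],[7,7,9,10],[7,7,10,9],[7,7,12,7],[7,7,13,6],[7,7,14,5],[7,8,9,9],[7,8,11,7],[7,8,13,5],[7,10,9,7],[7,11,5,10],[7,11,6,9],[7,11,8,7],[7,11,12,3],[7,12,5,9],[7,12,7,7],[7,12,11,3],[7,14,5,7],[7,15,5,6],[7,15,6,5],[7,15,8,3],[7,16,5,5],[7,16,7,3]]),(8,[[8,7,9,9],[8,7,11,7],[8,7,13,5],[8,9,9,7],[8,11,5,9],[8,11,7,7],[8,11,11,3],[8,13,5,7],[8,15,5,5],[8,15,7,3]]),(10,[[10,7,9,7],[10,11,5,7]]),(14,[[14,3,7,9],[14,3,9,7],[14,3,11,5],[14,5,7,7],[14,7,5,7],[14,7,7,5],[14,7,9,3],[14,9,3,7]]),(9,[]),(12,[[12,7,5,9],[12,7,7,7],[12,7,11,3],[12,9,3,9],[12,9,7,5],[12,9,9,3],[12,11,3,7],[12,13,3,5]]),(16,[[16,3,7,7],[16,7,5,5],[16,7,7,3],[16,9,3,5],[16,11,3,3]]),(11,[[11,7,5,10],[11,7,6,9],[11,7,8,7],[11,7,12,3],[11,8,5,9],[11,8,7,7],[11,8,11,3],[11,9,3,10],[11,9,4,9],[11,9,7,6],[11,9,8,5],[11,10,3,9],[11,10,7,5],[11,10,9,3],[11,12,3,7],[11,13,3,6],[11,13,4,5],[11,13,6,3],[11,14,3,5]]),(18,[[18,3,7,5],[18,3,9,3],[18,5,7,3]]),(13,[[13,3,7,10],[13,3,8,9],[13,3,10,7],[13,3,11,6],[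13,3,12,5],[13,4,7,9],[13,4,9,7],[13,4,11,5],[13,6,7,7],[13,7,7,6],[13,7,8,5],[13,7,10,3],[13,8,7,5],[13,8,9,3]]),(20,[]),(17,[[17,3,7,6],[17,3,8,5],[17,3,10,3],[17,4,7,5],[17,4,9,3],[17,6,7,3]]),(15,[[15,7,5,6],[15,7,6,5],[15,7,8,3],[15,8,5,5],[15,8,7,3],[15,9,3,6],[15,9,4,5],[15,9,6,3],[15,10,3,5],[15,12,3,3]])]"
  by (simp add: oddS_tab)
lemma st17: "foldr insB (phiL (Suc (Suc (Suc (Suc 0)))) [13,3,7,10]) [(7,[[7,7,5,14],[7,7,9,10],[7,7,10,9],[7,7,12,7],[7,7,13,6],[7,7,14,5],[7,8,9,9],[7,8,11,7],[7,8,13,5],[7,10,9,7],[7,11,5,10],[7,11,6,9],[7,11,8,7],[7,11,12,3],[7,12,5,9],[7,12,7,7],[7,12,11,3],[7,14,5,7],[7,15,5,6],[7,15,6,5],[7,15,8,3],[7,16,5,5],[7,16,7,3]]),(8,[[8,7,9,9],[8,7,11,7],[8,7,13,5],[8,9,9,7],[8,11,5,9],[8,11,7,7],[8,11,11,3],[8,13,5,7],[8,15,5,5],[8,15,7,3]]),(10,[[10,7,9,7],[10,11,5,7]]),(14,[[14,3,7,9],[14,3,9,7],[14,3,11,5],[14,5,7,7],[14,7,5,7],[14,7,7,5],[14,7,9,3],[14,9,3,7]]),(9,[]),(12,[[12,7,5,9],[12,7,7,7],[12,7,11,3],[12,9,3,9],[12,9,7,5],[12,9,9,3],[12,11,3,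7],[12,13,3,5]]),(16,[[16,3,7,7],[16,7,5,5],[16,7,7,3],[16,9,3,5],[16,11,3,3]]),(11,[[11,7,5,10],[11,7,6,9],[11,7,8,7],[11,7,12,3],[11,8,5,9],[11,8,7,7],[11,8,11,3],[11,9,3,10],[11,9,4,9],[11,9,7,6],[11,9,8,5],[11,10,3,9],[11,10,7,5],[11,10,9,3],[11,12,3,7],[11,13,3,6],[11,13,4,5],[11,13,6,3],[11,14,3,5]]),(18,[[18,3,7,5],[18,3,9,3],[18,5,7,3]]),(13,[[13,3,7,10],[13,3,8,9],[13,3,10,7],[13,3,11,6],[13,3,12,5],[13,4,7,9],[13,4,9,7],[13,4,11,5],[13,6,7,7],[13,7,7,6],[13,7,8,5],[13,7,10,3],[13,8,7,5],[13,8,9,3]]),(20,[]),(17,[[17,3,7,6],[17,3,8,5],[17,3,10,3],[17,4,7,5],[17,4,9,3],[17,6,7,3]]),(15,[[15,7,5,6],[15,7,6,5],[15,7,8,3],[15,8,5,5],[15,8,7,3],[15,9,3,6],[15,9,4,5],[15,9,6,3],[15,10,3,5],[15,12,3,3]])] = [(7,[[7,7,5,14],[7,7,9,10],[7,7,10,9],[7,7,12,7],[7,7,13,6],[7,7,14,5],[7,8,9,9],[7,8,11,7],[7,8,13,5],[7,10,9,7],[7,11,5,10],[7,11,6,9],[7,11,8,7],[7,11,12,3],[7,12,5,9],[7,12,7,7],[7,12,11,3],[7,14,5,7],[7,15,5,6],[7,15,6,5],[7,15,8,3],[7,16,5,5],[7,16,7,3]]),(8,[[8,7,9,9],[8,7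,11,7],[8,7,13,5],[8,9,9,7],[8,11,5,9],[8,11,7,7],[8,11,11,3],[8,13,5,7],[8,15,5,5],[8,15,7,3]]),(10,[[10,7,9,7],[10,11,5,7]]),(14,[[14,7,5,7],[14,9,3,7]]),(9,[]),(12,[[12,7,5,9],[12,7,7,7],[12,7,11,3],[12,9,3,9],[12,9,7,5],[12,9,9,3],[12,11,3,7],[12,13,3,5]]),(16,[[16,7,5,5],[16,7,7,3],[16,9,3,5],[16,11,3,3]]),(11,[[11,7,5,10],[11,7,6,9],[11,7,8,7],[11,7,12,3],[11,8,5,9],[11,8,7,7],[11,8,11,3],[11,9,3,10],[11,9,4,9],[11,9,7,6],[11,9,8,5],[11,10,3,9],[11,10,7,5],[11,10,9,3],[11,12,3,7],[11,13,3,6],[11,13,4,5],[11,13,6,3],[11,14,3,5]]),(18,[]),(13,[]),(20,[]),(17,[]),(15,[[15,7,5,6],[15,7,6,5],[15,7,8,3],[15,8,5,5],[15,8,7,3],[15,9,3,6],[15,9,4,5],[15,9,6,3],[15,10,3,5],[15,12,3,3]])]"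
  by (simp add: oddS_tab)
lemma st18: "foldr insB (phiL (Suc (Suc (Suc (Suc 0)))) [7,11,5,10]) [(7,[[7,7,5,14],[7,7,9,10],[7,7,10,9],[7,7,12,7],[7,7,13,6],[7,7,14,5],[7,8,9,9],[7,8,11,7],[7,8,13,5],[7,10,9,7],[7,11,5,10],[7,11,6,9],[7,11,8,7],[7,11,12,3],[7,12,5,9],[7,12,7,7],[7,12,11,3],[7,14,5,7],[7,15,5,6],[7,15,6,5],[7,15,8,3],[7,16,5,5],[7,16,7,3]]),(8,[[8,7,9,9],[8,7,11,7],[8,7,13,5],[8,9,9,7],[8,11,5,9],[8,11,7,7],[8,11,11,3],[8,13,5,7],[8,15,5,5],[8,15,7,3]]),(10,[[10,7,9,7],[10,11,5,7]]),(14,[[14,7,5,7],[14,9,3,7]]),(9,[]),(12,[[12,7,5,9],[12,7,7,7],[12,7,11,3],[12,9,3,9],[12,9,7,5],[12,9,9,3],[12,11,3,7],[12,13,3,5]]),(16,[[16,7,5,5],[16,7,7,3],[16,9,3,5],[16,11,3,3]]),(11,[[11,7,5,10],[11,7,6,9],[11,7,8,7],[11,7,12,3],[11,8,5,9],[11,8,7,7],[11,8,11,3],[11,9,3,10],[11,9,4,9],[11,9,7,6],[11,9,8,5],[11,10,3,9],[11,10,7,5],[11,10,9,3],[11,12,3,7],[11,13,3,6],[11,13,4,5],[11,13,6,3],[11,14,3,5]]),(18,[]),(13,[]),(20,[]),(17,[]),(15,[[15,7,5,6],[15,7,6,5],[15,7,8,3],[15,8,5,5],[15,8,7,3],[15,9,3,6],[15,9,4,5],[15,9,6,3],[15,10,3,5],[15,12,3,3]])]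 = [(7,[[7,7,5,14],[7,7,9,10],[7,7,10,9],[7,7,12,7],[7,7,13,6],[7,7,14,5],[7,8,9,9],[7,8,11,7],[7,8,13,5],[7,10,9,7],[7,11,9,6],[7,11,10,5],[7,11,12,3],[7,12,9,5],[7,12,11,3],[7,13,3,10],[7,13,4,9],[7,13,6,7],[7,13,7,6],[7,13,8,5],[7,14,3,9],[7,14,5,7],[7,14,7,5],[7,16,3,7],[7,17,3,6],[7,17,4,5],[7,17,6,3],[7,18,3,5],[7,18,5,3]]),(8,[[8,7,9,9],[8,7,11,7],[8,7,13,5],[8,9,9,7],[8,11,9,5],[8,11,11,3],[8,13,3,9],[8,13,5,7],[8,13,7,5],[8,15,3,7],[8,17,3,5],[8,17,5,3]]),(10,[[10,7,9,7],[10,11,3,9],[10,11,5,7],[10,11,7,5],[10,15,3,5],[10,15,5,3]]),(14,[[14,7,3,9],[14,7,5,7],[14,7,7,5],[14,9,3,7],[14,13,3,3]]),(9,[[9,11,3,10],[9,11,4,9],[9,11,6,7],[9,11,7,6],[9,11,8,5],[9,12,3,9],[9,12,5,7],[9,12,7,5],[9,14,3,7],[9,15,3,6],[9,15,4,5],[9,15,6,3],[9,16,3,5],[9,16,5,3]]),(12,[[12,7,9,5],[12,7,11,3],[12,9,9,3],[12,11,3,7],[12,13,3,5],[12,13,5,3],[12,15,3,3]]),(16,[[16,7,3,7]]),(11,[[11,7,9,6],[11,7,10,5],[11,7,12,3],[11,8,9,5],[11,8,11,3],[11,9,6,7],[11,10,9,3],[11,13,3,6],[11,13,4,5],[11,1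3,6,3],[11,14,3,5],[11,14,5,3],[11,16,3,3]]),(18,[[18,7,3,5],[18,7,5,3],[18,9,3,3]]),(13,[[13,7,3,10],[13,7,4,9],[13,7,6,7],[13,7,7,6],[13,7,8,5],[13,8,3,9],[13,8,5,7],[13,8,7,5],[13,10,3,7],[13,14,3,3]]),(20,[]),(17,[[17,7,3,6],[17,7,4,5],[17,7,6,3],[17,8,3,5],[17,8,5,3],[17,10,3,3]]),(15,[])]"
  by (simp add: oddS_tab)
lemma st19: "foldr insB (phiL (Suc (Suc (Suc (Suc 0)))) [7,13,3,10]) [(7,[[7,7,5,14],[7,7,9,10],[7,7,10,9],[7,7,12,7],[7,7,13,6],[7,7,14,5],[7,8,9,9],[7,8,11,7],[7,8,13,5],[7,10,9,7],[7,11,9,6],[7,11,10,5],[7,11,12,3],[7,12,9,5],[7,12,11,3],[7,13,3,10],[7,13,4,9],[7,13,6,7],[7,13,7,6],[7,13,8,5],[7,14,3,9],[7,14,5,7],[7,14,7,5],[7,16,3,7],[7,17,3,6],[7,17,4,5],[7,17,6,3],[7,18,3,5],[7,18,5,3]]),(8,[[8,7,9,9],[8,7,11,7],[8,7,13,5],[8,9,9,7],[8,11,9,5],[8,11,11,3],[8,13,3,9],[8,13,5,7],[8,13,7,5],[8,15,3,7],[8,17,3,5],[8,17,5,3]]),(10,[[10,7,9,7],[10,11,3,9],[10,11,5,7],[10,11,7,5],[10,15,3,5],[10,15,5,3]]),(14,[[14,7,3,9],[14,7,5,7],[14,7,7,5],[14,9,3,7],[14,13,3,3]]),(9,[[9,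11,3,10],[9,11,4,9],[9,11,6,7],[9,11,7,6],[9,11,8,5],[9,12,3,9],[9,12,5,7],[9,12,7,5],[9,14,3,7],[9,15,3,6],[9,15,4,5],[9,15,6,3],[9,16,3,5],[9,16,5,3]]),(12,[[12,7,9,5],[12,7,11,3],[12,9,9,3],[12,11,3,7],[12,13,3,5],[12,13,5,3],[12,15,3,3]]),(16,[[16,7,3,7]]),(11,[[11,7,9,6],[11,7,10,5],[11,7,12,3],[11,8,9,5],[11,8,11,3],[11,9,6,7],[11,10,9,3],[11,13,3,6],[11,13,4,5],[11,13,6,3],[11,14,3,5],[11,14,5,3],[11,16,3,3]]),(18,[[18,7,3,5],[18,7,5,3],[18,9,3,3]]),(13,[[13,7,3,10],[13,7,4,9],[13,7,6,7],[13,7,7,6],[13,7,8,5],[13,8,3,9],[13,8,5,7],[13,8,7,5],[13,10,3,7],[13,14,3,3]]),(20,[]),(17,[[17,7,3,6],[17,7,4,5],[17,7,6,3],[17,8,3,5],[17,8,5,3],[17,10,3,3]]),(15,[])] = [(7,[[7,7,5,14],[7,7,9,10],[7,7,10,9],[7,7,12,7],[7,7,13,6],[7,7,14,5],[7,8,9,9],[7,8,11,7],[7,8,13,5],[7,10,9,7],[7,11,9,6],[7,11,10,5],[7,11,12,3],[7,12,9,5],[7,12,11,3]]),(8,[[8,7,9,9],[8,7,11,7],[8,7,13,5],[8,9,9,7],[8,11,9,5],[8,11,11,3]]),(10,[[10,7,9,7]]),(14,[]),(9,[]),(12,[[12,7,9,5],[12,7,11,3],[12,9,9,3]]),(16,[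]),(11,[[11,7,9,6],[11,7,10,5],[11,7,12,3],[11,8,9,5],[11,8,11,3],[11,9,6,7],[11,10,9,3]]),(18,[]),(13,[]),(20,[]),(17,[]),(15,[])]"
  by (simp add: oddS_tab)
lemma st20: "foldr insB (phiL (Suc (Suc (Suc (Suc 0)))) [7,7,10,9]) [(7,[[7,7,5,14],[7,7,9,10],[7,7,10,9],[7,7,12,7],[7,7,13,6],[7,7,14,5],[7,8,9,9],[7,8,11,7],[7,8,13,5],[7,10,9,7],[7,11,9,6],[7,11,10,5],[7,11,12,3],[7,12,9,5],[7,12,11,3]]),(8,[[8,7,9,9],[8,7,11,7],[8,7,13,5],[8,9,9,7],[8,11,9,5],[8,11,11,3]]),(10,[[10,7,9,7]]),(14,[]),(9,[]),(12,[[12,7,9,5],[12,7,11,3],[12,9,9,3]]),(16,[]),(11,[[11,7,9,6],[11,7,10,5],[11,7,12,3],[11,8,9,5],[11,8,11,3],[11,9,6,7],[11,10,9,3]]),(18,[]),(13,[]),(20,[]),(17,[]),(15,[])] = [(7,[[7,7,5,14],[7,7,9,10],[7,7,13,6],[7,9,10,7],[7,10,7,9],[7,10,9,7],[7,10,11,5],[7,11,6,9],[7,11,8,7],[7,11,9,6],[7,11,10,5],[7,12,5,9],[7,12,9,5],[7,13,6,7],[7,14,5,7],[7,14,7,5],[7,14,9,3],[7,15,6,5],[7,15,8,3],[7,16,5,5],[7,16,7,3]]),(8,[[8,9,7,9],[8,9,9,7],[8,9,11,5],[8,11,5,9],[8,11,9,5],[8,13,5,7],[8,13,7,5],[8,1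3,9,3],[8,15,5,5],[8,15,7,3]]),(10,[[10,7,7,9],[10,7,9,7],[10,7,11,5],[10,11,5,7],[10,11,7,5],[10,11,9,3]]),(14,[[14,7,5,7],[14,7,7,5],[14,7,9,3],[14,9,3,7],[14,9,7,3]]),(9,[[9,7,10,7],[9,8,9,7],[9,10,7,7],[9,11,6,7],[9,12,5,7]]),(12,[[12,7,5,9],[12,7,9,5],[12,9,3,9],[12,9,9,3],[12,11,3,7],[12,11,7,3],[12,13,3,5]]),(16,[[16,7,5,5],[16,7,7,3],[16,9,3,5],[16,11,3,3]]),(11,[[11,7,6,9],[11,7,8,7],[11,7,9,6],[11,7,10,5],[11,8,5,9],[11,8,7,7],[11,8,9,5],[11,9,10,3],[11,10,3,9],[11,10,9,3],[11,12,3,7],[11,12,7,3],[11,13,6,3],[11,14,3,5]]),(18,[]),(13,[[13,7,6,7],[13,8,5,7],[13,10,3,7]]),(20,[]),(17,[]),(15,[[15,7,6,5],[15,7,8,3],[15,8,5,5],[15,8,7,3],[15,9,6,3],[15,10,3,5],[15,12,3,3]])]"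
  by (simp add: oddS_tab)
lemma st21: "foldr insB (phiL (Suc (Suc (Suc (Suc 0)))) [7,10,7,9]) [(7,[[7,7,5,14],[7,7,9,10],[7,7,13,6],[7,9,10,7],[7,10,7,9],[7,10,9,7],[7,10,11,5],[7,11,6,9],[7,11,8,7],[7,11,9,6],[7,11,10,5],[7,12,5,9],[7,12,9,5],[7,13,6,7],[7,14,5,7],[7,14,7,5],[7,14,9,3],[7,15,6,5],[7,15,8,3],[7,16,5,5],[7,16,7,3]]),(8,[[8,9,7,9],[8,9,9,7],[8,9,11,5],[8,11,5,9],[8,11,9,5],[8,13,5,7],[8,13,7,5],[8,13,9,3],[8,15,5,5],[8,15,7,3]]),(10,[[10,7,7,9],[10,7,9,7],[10,7,11,5],[10,11,5,7],[10,11,7,5],[10,11,9,3]]),(14,[[14,7,5,7],[14,7,7,5],[14,7,9,3],[14,9,3,7],[14,9,7,3]]),(9,[[9,7,10,7],[9,8,9,7],[9,10,7,7],[9,11,6,7],[9,12,5,7]]),(12,[[12,7,5,9],[12,7,9,5],[12,9,3,9],[12,9,9,3],[12,11,3,7],[12,11,7,3],[12,13,3,5]]),(16,[[16,7,5,5],[16,7,7,3],[16,9,3,5],[16,11,3,3]]),(11,[[11,7,6,9],[11,7,8,7],[11,7,9,6],[11,7,10,5],[11,8,5,9],[11,8,7,7],[11,8,9,5],[11,9,10,3],[11,10,3,9],[11,10,9,3],[11,12,3,7],[11,12,7,3],[11,13,6,3],[11,14,3,5]]),(18,[]),(13,[[13,7,6,7],[13,8,5,7],[13,10,3,7]]),(20,[]),(17,[]),(15,[[15,7,6,5],[15,7,8,3],[15,8,5,5],[15,8,7,3],[15,9,6,3],[15,10,3,5],[15,12,3,3]])]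 = [(7,[[7,7,5,14],[7,7,9,10],[7,7,13,6],[7,9,10,7],[7,11,6,9],[7,11,8,7],[7,11,9,6],[7,11,10,5],[7,12,5,9],[7,12,7,7],[7,12,9,5],[7,13,6,7],[7,14,5,7],[7,15,6,5],[7,15,8,3],[7,16,5,5],[7,16,7,3]]),(8,[[8,11,5,9],[8,11,7,7],[8,11,9,5],[8,13,5,7],[8,15,5,5],[8,15,7,3]]),(10,[[10,11,5,7]]),(14,[[14,5,7,7],[14,7,5,7],[14,9,3,7]]),(9,[[9,7,10,7],[9,8,9,7],[9,11,6,7],[9,12,5,7]]),(12,[[12,5,7,9],[12,5,9,7],[12,5,11,5],[12,7,5,9],[12,7,9,5],[12,9,3,9],[12,9,9,3],[12,11,3,7],[12,13,3,5]]),(16,[[16,5,7,5],[16,5,9,3],[16,7,5,5],[16,9,3,5],[16,11,3,3]]),(11,[[11,6,7,9],[11,6,9,7],[11,6,11,5],[11,7,6,9],[11,7,8,7],[11,7,9,6],[11,7,10,5],[11,8,5,9],[11,8,9,5],[11,9,10,3],[11,10,3,9],[11,10,9,3],[11,12,3,7],[11,13,6,3],[11,14,3,5]]),(18,[]),(13,[[13,6,7,7],[13,7,6,7],[13,8,5,7],[13,10,3,7]]),(20,[]),(17,[]),(15,[[15,6,7,5],[15,6,9,3],[15,7,6,5],[15,7,8,3],[15,8,5,5],[15,9,6,3],[15,10,3,5],[15,12,3,3]])]"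
  by (simp add: oddS_tab)
lemma st22: "foldr insB (phiL (Suc (Suc (Suc (Suc 0)))) [11,6,7,9]) [(7,[[7,7,5,14],[7,7,9,10],[7,7,13,6],[7,9,10,7],[7,11,6,9],[7,11,8,7],[7,11,9,6],[7,11,10,5],[7,12,5,9],[7,12,7,7],[7,12,9,5],[7,13,6,7],[7,14,5,7],[7,15,6,5],[7,15,8,3],[7,16,5,5],[7,16,7,3]]),(8,[[8,11,5,9],[8,11,7,7],[8,11,9,5],[8,13,5,7],[8,15,5,5],[8,15,7,3]]),(10,[[10,11,5,7]]),(14,[[14,5,7,7],[14,7,5,7],[14,9,3,7]]),(9,[[9,7,10,7],[9,8,9,7],[9,11,6,7],[9,12,5,7]]),(12,[[12,5,7,9],[12,5,9,7],[12,5,11,5],[12,7,5,9],[12,7,9,5],[12,9,3,9],[12,9,9,3],[12,11,3,7],[12,13,3,5]]),(16,[[16,5,7,5],[16,5,9,3],[16,7,5,5],[16,9,3,5],[16,11,3,3]]),(11,[[11,6,7,9],[11,6,9,7],[11,6,11,5],[11,7,6,9],[11,7,8,7],[11,7,9,6],[11,7,10,5],[11,8,5,9],[11,8,9,5],[11,9,10,3],[11,10,3,9],[11,10,9,3],[11,12,3,7],[11,13,6,3],[11,14,3,5]]),(18,[]),(13,[[13,6,7,7],[13,7,6,7],[13,8,5,7],[13,10,3,7]]),(20,[]),(17,[]),(15,[[15,6,7,5],[15,6,9,3],[15,7,6,5],[15,7,8,3],[15,8,5,5],[15,9,6,3],[15,10,3,5],[15,12,3,3]])] = [(7,[[7,7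,5,14],[7,7,9,10],[7,7,13,6],[7,9,10,7],[7,11,6,9],[7,11,8,7],[7,11,9,6],[7,11,10,5],[7,12,5,9],[7,12,7,7],[7,12,9,5],[7,13,6,7],[7,14,5,7],[7,15,6,5],[7,15,8,3],[7,16,5,5],[7,16,7,3]]),(8,[[8,11,5,9],[8,11,7,7],[8,11,9,5],[8,13,5,7],[8,15,5,5],[8,15,7,3]]),(10,[[10,11,5,7]]),(14,[[14,3,7,9],[14,3,9,7],[14,3,11,5],[14,5,7,7],[14,7,5,7],[14,7,7,5],[14,7,9,3],[14,9,3,7]]),(9,[[9,7,10,7],[9,8,9,7],[9,11,6,7],[9,12,5,7]]),(12,[[12,7,5,9],[12,7,7,7],[12,7,9,5],[12,9,3,9],[12,9,7,5],[12,11,3,7],[12,13,3,5]]),(16,[[16,3,7,7],[16,7,5,5],[16,7,7,3],[16,9,3,5],[16,11,3,3]]),(11,[[11,7,6,9],[11,7,8,7],[11,7,9,6],[11,7,10,5],[11,8,5,9],[11,8,7,7],[11,8,9,5],[11,9,10,3],[11,10,3,9],[11,10,7,5],[11,12,3,7],[11,13,6,3],[11,14,3,5]]),(18,[[18,3,7,5],[18,3,9,3],[18,5,7,3]]),(13,[[13,7,6,7],[13,8,5,7],[13,10,3,7]]),(20,[]),(17,[]),(15,[[15,7,6,5],[15,7,8,3],[15,8,5,5],[15,8,7,3],[15,9,6,3],[15,10,3,5],[15,12,3,3]])]"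
  by (simp add: oddS_tab)
lemma st23: "foldr insB (phiL (Suc (Suc (Suc (Suc 0)))) [14,3,7,9]) [(7,[[7,7,5,14],[7,7,9,10],[7,7,13,6],[7,9,10,7],[7,11,6,9],[7,11,8,7],[7,11,9,6],[7,11,10,5],[7,12,5,9],[7,12,7,7],[7,12,9,5],[7,13,6,7],[7,14,5,7],[7,15,6,5],[7,15,8,3],[7,16,5,5],[7,16,7,3]]),(8,[[8,11,5,9],[8,11,7,7],[8,11,9,5],[8,13,5,7],[8,15,5,5],[8,15,7,3]]),(10,[[10,11,5,7]]),(14,[[14,3,7,9],[14,3,9,7],[14,3,11,5],[14,5,7,7],[14,7,5,7],[14,7,7,5],[14,7,9,3],[14,9,3,7]]),(9,[[9,7,10,7],[9,8,9,7],[9,11,6,7],[9,12,5,7]]),(12,[[12,7,5,9],[12,7,7,7],[12,7,9,5],[12,9,3,9],[12,9,7,5],[12,11,3,7],[12,13,3,5]]),(16,[[16,3,7,7],[16,7,5,5],[16,7,7,3],[16,9,3,5],[16,11,3,3]]),(11,[[11,7,6,9],[11,7,8,7],[11,7,9,6],[11,7,10,5],[11,8,5,9],[11,8,7,7],[11,8,9,5],[11,9,10,3],[11,10,3,9],[11,10,7,5],[11,12,3,7],[11,13,6,3],[11,14,3,5]]),(18,[[18,3,7,5],[18,3,9,3],[18,5,7,3]]),(13,[[13,7,6,7],[13,8,5,7],[13,10,3,7]]),(20,[]),(17,[]),(15,[[15,7,6,5],[15,7,8,3],[15,8,5,5],[15,8,7,3],[15,9,6,3],[15,10,3,5],[15,12,3,3]])]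 = [(7,[[7,7,5,14],[7,7,9,10],[7,7,13,6],[7,9,10,7],[7,11,6,9],[7,11,8,7],[7,11,9,6],[7,11,10,5],[7,12,5,9],[7,12,7,7],[7,12,9,5],[7,13,6,7],[7,14,5,7],[7,15,6,5],[7,15,8,3],[7,16,5,5],[7,16,7,3]]),(8,[[8,11,5,9],[8,11,7,7],[8,11,9,5],[8,13,5,7],[8,15,5,5],[8,15,7,3]]),(10,[[10,11,5,7]]),(14,[[14,7,5,7],[14,9,3,7]]),(9,[[9,7,10,7],[9,8,9,7],[9,11,6,7],[9,12,5,7]]),(12,[[12,7,5,9],[12,7,7,7],[12,7,9,5],[12,9,3,9],[12,9,7,5],[12,11,3,7],[12,13,3,5]]),(16,[[16,7,5,5],[16,7,7,3],[16,9,3,5],[16,11,3,3]]),(11,[[11,7,6,9],[11,7,8,7],[11,7,9,6],[11,7,10,5],[11,8,5,9],[11,8,7,7],[11,8,9,5],[11,9,10,3],[11,10,3,9],[11,10,7,5],[11,12,3,7],[11,13,6,3],[11,14,3,5]]),(18,[]),(13,[[13,7,6,7],[13,8,5,7],[13,10,3,7]]),(20,[]),(17,[]),(15,[[15,7,6,5],[15,7,8,3],[15,8,5,5],[15,8,7,3],[15,9,6,3],[15,10,3,5],[15,12,3,3]])]"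
  by (simp add: oddS_tab)
lemma st24: "foldr insB (phiL (Suc (Suc (Suc (Suc 0)))) [7,11,6,9]) [(7,[[7,7,5,14],[7,7,9,10],[7,7,13,6],[7,9,10,7],[7,11,6,9],[7,11,8,7],[7,11,9,6],[7,11,10,5],[7,12,5,9],[7,12,7,7],[7,12,9,5],[7,13,6,7],[7,14,5,7],[7,15,6,5],[7,15,8,3],[7,16,5,5],[7,16,7,3]]),(8,[[8,11,5,9],[8,11,7,7],[8,11,9,5],[8,13,5,7],[8,15,5,5],[8,15,7,3]]),(10,[[10,11,5,7]]),(14,[[14,7,5,7],[14,9,3,7]]),(9,[[9,7,10,7],[9,8,9,7],[9,11,6,7],[9,12,5,7]]),(12,[[12,7,5,9],[12,7,7,7],[12,7,9,5],[12,9,3,9],[12,9,7,5],[12,11,3,7],[12,13,3,5]]),(16,[[16,7,5,5],[16,7,7,3],[16,9,3,5],[16,11,3,3]]),(11,[[11,7,6,9],[11,7,8,7],[11,7,9,6],[11,7,10,5],[11,8,5,9],[11,8,7,7],[11,8,9,5],[11,9,10,3],[11,10,3,9],[11,10,7,5],[11,12,3,7],[11,13,6,3],[11,14,3,5]]),(18,[]),(13,[[13,7,6,7],[13,8,5,7],[13,10,3,7]]),(20,[]),(17,[]),(15,[[15,7,6,5],[15,7,8,3],[15,8,5,5],[15,8,7,3],[15,9,6,3],[15,10,3,5],[15,12,3,3]])] = [(7,[[7,7,5,14],[7,7,9,10],[7,7,13,6],[7,9,10,7],[7,11,9,6],[7,14,3,9],[7,14,5,7],[7,14,7,5],[7,1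6,3,7],[7,18,3,5],[7,18,5,3]]),(8,[[8,13,3,9],[8,13,5,7],[8,13,7,5],[8,15,3,7],[8,17,3,5],[8,17,5,3]]),(10,[[10,11,3,9],[10,11,5,7],[10,11,7,5],[10,15,3,5],[10,15,5,3]]),(14,[[14,7,3,9],[14,7,5,7],[14,7,7,5],[14,9,3,7],[14,13,3,3]]),(9,[[9,7,10,7],[9,8,9,7],[9,14,3,7]]),(12,[[12,11,3,7],[12,13,3,5],[12,13,5,3],[12,15,3,3]]),(16,[[16,7,3,7]]),(11,[[11,7,9,6],[11,9,6,7],[11,9,10,3],[11,14,3,5],[11,14,5,3],[11,16,3,3]]),(18,[[18,7,3,5],[18,7,5,3],[18,9,3,3]]),(13,[]),(20,[]),(17,[]),(15,[])]"
  by (simp add: oddS_tab)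
lemma st25: "foldr insB (phiL (Suc (Suc (Suc (Suc 0)))) [7,14,3,9]) [(7,[[7,7,5,14],[7,7,9,10],[7,7,13,6],[7,9,10,7],[7,11,9,6],[7,14,3,9],[7,14,5,7],[7,14,7,5],[7,16,3,7],[7,18,3,5],[7,18,5,3]]),(8,[[8,13,3,9],[8,13,5,7],[8,13,7,5],[8,15,3,7],[8,17,3,5],[8,17,5,3]]),(10,[[10,11,3,9],[10,11,5,7],[10,11,7,5],[10,15,3,5],[10,15,5,3]]),(14,[[14,7,3,9],[14,7,5,7],[14,7,7,5],[14,9,3,7],[14,13,3,3]]),(9,[[9,7,10,7],[9,8,9,7],[9,14,3,7]]),(12,[[12,11,3,7],[12,13,3,5],[12,13,5,3],[12,15,3,3]]),(16,[[16,7,3,7]]),(11,[[11,7,9,6],[11,9,6,7],[11,9,10,3],[11,14,3,5],[11,14,5,3],[11,16,3,3]]),(18,[[18,7,3,5],[18,7,5,3],[18,9,3,3]]),(13,[]),(20,[]),(17,[]),(15,[])] = [(7,[[7,7,5,14],[7,7,9,10],[7,7,13,6],[7,9,10,7],[7,11,9,6]]),(8,[]),(10,[]),(14,[]),(9,[[9,7,10,7],[9,8,9,7]]),(12,[]),(16,[]),(11,[[11,7,9,6],[11,9,6,7],[11,9,10,3]]),(18,[]),(13,[]),(20,[]),(17,[]),(15,[])]"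
  by (simp add: oddS_tab)
lemma st26: "foldr insB (phiL (Suc (Suc (Suc (Suc 0)))) [7,9,10,7]) [(7,[[7,7,5,14],[7,7,9,10],[7,7,13,6],[7,9,10,7],[7,11,9,6]]),(8,[]),(10,[]),(14,[]),(9,[[9,7,10,7],[9,8,9,7]]),(12,[]),(16,[]),(11,[[11,7,9,6],[11,9,6,7],[11,9,10,3]]),(18,[]),(13,[]),(20,[]),(17,[]),(15,[])] = [(7,[[7,7,5,14],[7,7,9,10],[7,7,13,6],[7,10,9,7],[7,11,9,6],[7,12,7,7],[7,13,6,7],[7,14,5,7]]),(8,[[8,9,9,7],[8,11,7,7],[8,13,5,7]]),(10,[[10,7,9,7],[10,11,5,7]]),(14,[[14,5,7,7],[14,7,5,7],[14,9,3,7]]),(9,[[9,10,7,7],[9,11,6,7],[9,12,5,7]]),(12,[[12,5,9,7],[12,11,3,7]]),(16,[[16,5,5,7],[16,7,3,7]]),(11,[[11,5,10,7],[11,6,9,7],[11,7,9,6],[11,8,7,7],[11,9,6,7],[11,9,10,3],[11,12,3,7]]),(18,[]),(13,[[13,7,6,7],[13,8,5,7],[13,10,3,7]]),(20,[]),(17,[]),(15,[[15,5,6,7],[15,6,5,7],[15,8,3,7]])]"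
  by (simp add: oddS_tab)
lemma st27: "foldr insB (phiL (Suc (Suc (Suc (Suc 0)))) [11,5,10,7]) [(7,[[7,7,5,14],[7,7,9,10],[7,7,13,6],[7,10,9,7],[7,11,9,6],[7,12,7,7],[7,13,6,7],[7,14,5,7]]),(8,[[8,9,9,7],[8,11,7,7],[8,13,5,7]]),(10,[[10,7,9,7],[10,11,5,7]]),(14,[[14,5,7,7],[14,7,5,7],[14,9,3,7]]),(9,[[9,10,7,7],[9,11,6,7],[9,12,5,7]]),(12,[[12,5,9,7],[12,11,3,7]]),(16,[[16,5,5,7],[16,7,3,7]]),(11,[[11,5,10,7],[11,6,9,7],[11,7,9,6],[11,8,7,7],[11,9,6,7],[11,9,10,3],[11,12,3,7]]),(18,[]),(13,[[13,7,6,7],[13,8,5,7],[13,10,3,7]]),(20,[]),(17,[]),(15,[[15,5,6,7],[15,6,5,7],[15,8,3,7]])] = [(7,[[7,7,5,14],[7,7,9,10],[7,7,13,6],[7,10,9,7],[7,11,9,6],[7,12,7,7],[7,13,6,7],[7,14,5,7]]),(8,[[8,9,9,7],[8,11,7,7],[8,13,5,7]]),(10,[[10,7,9,7],[10,11,5,7]]),(14,[[14,3,9,7],[14,5,7,7],[14,9,3,7]]),(9,[[9,10,7,7],[9,11,6,7],[9,12,5,7]]),(12,[[12,7,7,7],[12,9,5,7],[12,11,3,7]]),(16,[[16,3,7,7]]),(11,[[11,7,9,6],[11,9,10,3],[11,10,5,7],[11,12,3,7]]),(18,[[18,3,5,7],[18,5,3,7]]),(13,[[13,3,10,7],[13,4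,9,7],[13,6,7,7],[13,10,3,7]]),(20,[]),(17,[[17,3,6,7],[17,4,5,7],[17,6,3,7]]),(15,[])]"
  by (simp add: oddS_tab)
lemma st28: "foldr insB (phiL (Suc (Suc (Suc (Suc 0)))) [13,3,10,7]) [(7,[[7,7,5,14],[7,7,9,10],[7,7,13,6],[7,10,9,7],[7,11,9,6],[7,12,7,7],[7,13,6,7],[7,14,5,7]]),(8,[[8,9,9,7],[8,11,7,7],[8,13,5,7]]),(10,[[10,7,9,7],[10,11,5,7]]),(14,[[14,3,9,7],[14,5,7,7],[14,9,3,7]]),(9,[[9,10,7,7],[9,11,6,7],[9,12,5,7]]),(12,[[12,7,7,7],[12,9,5,7],[12,11,3,7]]),(16,[[16,3,7,7]]),(11,[[11,7,9,6],[11,9,10,3],[11,10,5,7],[11,12,3,7]]),(18,[[18,3,5,7],[18,5,3,7]]),(13,[[13,3,10,7],[13,4,9,7],[13,6,7,7],[13,10,3,7]]),(20,[]),(17,[[17,3,6,7],[17,4,5,7],[17,6,3,7]]),(15,[])] = [(7,[[7,7,5,14],[7,7,9,10],[7,7,13,6],[7,10,9,7],[7,11,9,6],[7,12,7,7],[7,13,6,7],[7,14,5,7]]),(8,[[8,9,9,7],[8,11,7,7],[8,13,5,7]]),(10,[[10,7,9,7],[10,11,5,7]]),(14,[[14,7,5,7],[14,9,3,7]]),(9,[[9,10,7,7],[9,11,6,7],[9,12,5,7]]),(12,[[12,7,7,7],[12,9,5,7],[12,11,3,7]]),(16,[]),(11,[[11,7,9,6],[11,9,10,3],[11,10,5,7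],[11,12,3,7]]),(18,[]),(13,[[13,7,6,7],[13,8,5,7],[13,10,3,7]]),(20,[]),(17,[]),(15,[])]"
  by (simp add: oddS_tab)
lemma st29: "foldr insB (phiL (Suc (Suc (Suc (Suc 0)))) [7,10,9,7]) [(7,[[7,7,5,14],[7,7,9,10],[7,7,13,6],[7,10,9,7],[7,11,9,6],[7,12,7,7],[7,13,6,7],[7,14,5,7]]),(8,[[8,9,9,7],[8,11,7,7],[8,13,5,7]]),(10,[[10,7,9,7],[10,11,5,7]]),(14,[[14,7,5,7],[14,9,3,7]]),(9,[[9,10,7,7],[9,11,6,7],[9,12,5,7]]),(12,[[12,7,7,7],[12,9,5,7],[12,11,3,7]]),(16,[]),(11,[[11,7,9,6],[11,9,10,3],[11,10,5,7],[11,12,3,7]]),(18,[]),(13,[[13,7,6,7],[13,8,5,7],[13,10,3,7]]),(20,[]),(17,[]),(15,[])] = [(7,[[7,7,5,14],[7,7,9,10],[7,7,13,6],[7,11,9,6],[7,13,6,7]]),(8,[]),(10,[]),(14,[[14,5,7,7]]),(9,[[9,11,6,7],[9,12,5,7]]),(12,[[12,5,9,7],[12,7,7,7],[12,9,5,7]]),(16,[[16,5,5,7],[16,7,3,7]]),(11,[[11,6,9,7],[11,7,9,6],[11,8,7,7],[11,9,10,3],[11,10,5,7]]),(18,[]),(13,[[13,6,7,7],[13,7,6,7],[13,8,5,7],[13,10,3,7]]),(20,[]),(17,[]),(15,[[15,6,5,7],[15,8,3,7]])]"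
  by (simp add: oddS_tab)
lemma st30: "foldr insB (phiL (Suc (Suc (Suc (Suc 0)))) [11,6,9,7]) [(7,[[7,7,5,14],[7,7,9,10],[7,7,13,6],[7,11,9,6],[7,13,6,7]]),(8,[]),(10,[]),(14,[[14,5,7,7]]),(9,[[9,11,6,7],[9,12,5,7]]),(12,[[12,5,9,7],[12,7,7,7],[12,9,5,7]]),(16,[[16,5,5,7],[16,7,3,7]]),(11,[[11,6,9,7],[11,7,9,6],[11,8,7,7],[11,9,10,3],[11,10,5,7]]),(18,[]),(13,[[13,6,7,7],[13,7,6,7],[13,8,5,7],[13,10,3,7]]),(20,[]),(17,[]),(15,[[15,6,5,7],[15,8,3,7]])] = [(7,[[7,7,5,14],[7,7,9,10],[7,7,13,6],[7,11,9,6],[7,13,6,7]]),(8,[]),(10,[]),(14,[[14,3,9,7],[14,5,7,7],[14,7,5,7]]),(9,[[9,11,6,7],[9,12,5,7]]),(12,[]),(16,[[16,3,7,7]]),(11,[[11,7,9,6],[11,9,10,3]]),(18,[[18,3,5,7],[18,5,3,7]]),(13,[[13,7,6,7],[13,8,5,7],[13,10,3,7]]),(20,[]),(17,[]),(15,[])]"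
  by (simp add: oddS_tab)
lemma st31: "foldr insB (phiL (Suc (Suc (Suc (Suc 0)))) [14,3,9,7]) [(7,[[7,7,5,14],[7,7,9,10],[7,7,13,6],[7,11,9,6],[7,13,6,7]]),(8,[]),(10,[]),(14,[[14,3,9,7],[14,5,7,7],[14,7,5,7]]),(9,[[9,11,6,7],[9,12,5,7]]),(12,[]),(16,[[16,3,7,7]]),(11,[[11,7,9,6],[11,9,10,3]]),(18,[[18,3,5,7],[18,5,3,7]]),(13,[[13,7,6,7],[13,8,5,7],[13,10,3,7]]),(20,[]),(17,[]),(15,[])] = [(7,[[7,7,5,14],[7,7,9,10],[7,7,13,6],[7,11,9,6],[7,13,6,7]]),(8,[]),(10,[]),(14,[]),(9,[[9,11,6,7],[9,12,5,7]]),(12,[]),(16,[]),(11,[[11,7,9,6],[11,9,10,3]]),(18,[]),(13,[[13,7,6,7],[13,8,5,7],[13,10,3,7]]),(20,[]),(17,[]),(15,[])]"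
  by (simp add: oddS_tab)
lemma st32: "foldr insB (phiL (Suc (Suc (Suc (Suc 0)))) [7,13,6,7]) [(7,[[7,7,5,14],[7,7,9,10],[7,7,13,6],[7,11,9,6],[7,13,6,7]]),(8,[]),(10,[]),(14,[]),(9,[[9,11,6,7],[9,12,5,7]]),(12,[]),(16,[]),(11,[[11,7,9,6],[11,9,10,3]]),(18,[]),(13,[[13,7,6,7],[13,8,5,7],[13,10,3,7]]),(20,[]),(17,[]),(15,[])] = [(7,[[7,7,5,14],[7,7,9,10],[7,7,13,6],[7,11,9,6],[7,14,5,7],[7,16,3,7]]),(8,[[8,13,5,7],[8,15,3,7]]),(10,[[10,11,5,7]]),(14,[[14,7,5,7],[14,9,3,7]]),(9,[[9,14,3,7]]),(12,[[12,11,3,7]]),(16,[[16,7,3,7]]),(11,[[11,7,9,6],[11,9,10,3]]),(18,[]),(13,[]),(20,[]),(17,[]),(15,[])]"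
  by (simp add: oddS_tab)
lemma st33: "foldr insB (phiL (Suc (Suc (Suc (Suc 0)))) [7,14,5,7]) [(7,[[7,7,5,14],[7,7,9,10],[7,7,13,6],[7,11,9,6],[7,14,5,7],[7,16,3,7]]),(8,[[8,13,5,7],[8,15,3,7]]),(10,[[10,11,5,7]]),(14,[[14,7,5,7],[14,9,3,7]]),(9,[[9,14,3,7]]),(12,[[12,11,3,7]]),(16,[[16,7,3,7]]),(11,[[11,7,9,6],[11,9,10,3]]),(18,[]),(13,[]),(20,[]),(17,[]),(15,[])] = [(7,[[7,7,5,14],[7,7,9,10],[7,7,13,6],[7,11,9,6]]),(8,[]),(10,[]),(14,[]),(9,[]),(12,[]),(16,[]),(11,[[11,7,9,6],[11,9,10,3]]),(18,[]),(13,[]),(20,[]),(17,[]),(15,[])]"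
  by (simp add: oddS_tab)
lemma st34: "foldr insB (phiL (Suc (Suc (Suc (Suc 0)))) [7,7,13,6]) [(7,[[7,7,5,14],[7,7,9,10],[7,7,13,6],[7,11,9,6]]),(8,[]),(10,[]),(14,[]),(9,[]),(12,[]),(16,[]),(11,[[11,7,9,6],[11,9,10,3]]),(18,[]),(13,[]),(20,[]),(17,[]),(15,[])] = [(7,[[7,7,5,14],[7,7,9,10],[7,7,14,5],[7,7,16,3],[7,8,13,5],[7,8,15,3],[7,9,11,6],[7,9,12,5],[7,9,14,3],[7,10,11,5],[7,11,9,6],[7,12,11,3],[7,13,7,6],[7,13,8,5],[7,13,10,3],[7,14,7,5],[7,14,9,3],[7,16,7,3]]),(8,[[8,7,13,5],[8,7,15,3],[8,9,11,5],[8,11,11,3],[8,13,7,5],[8,13,9,3],[8,15,7,3]]),(10,[[10,7,11,5],[10,11,7,5],[10,11,9,3]]),(14,[[14,7,7,5],[14,7,9,3],[14,9,7,3]]),(9,[[9,7,11,6],[9,7,12,5],[9,7,14,3],[9,8,11,5],[9,8,13,3],[9,10,11,3],[9,11,7,6],[9,11,8,5],[9,11,10,3],[9,12,7,5],[9,12,9,3],[9,14,7,3]]),(12,[[12,7,11,3],[12,11,7,3]]),(16,[[16,7,7,3]]),(11,[[11,7,9,6],[11,9,10,3]]),(18,[]),(13,[[13,7,7,6],[13,7,8,5],[13,7,10,3],[13,8,7,5],[13,8,9,3],[13,10,7,3]]),(20,[]),(17,[]),(15,[])]"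
  by (simp add: oddS_tab)
lemma st35: "foldr insB (phiL (Suc (Suc (Suc (Suc 0)))) [7,9,11,6]) [(7,[[7,7,5,14],[7,7,9,10],[7,7,14,5],[7,7,16,3],[7,8,13,5],[7,8,15,3],[7,9,11,6],[7,9,12,5],[7,9,14,3],[7,10,11,5],[7,11,9,6],[7,12,11,3],[7,13,7,6],[7,13,8,5],[7,13,10,3],[7,14,7,5],[7,14,9,3],[7,16,7,3]]),(8,[[8,7,13,5],[8,7,15,3],[8,9,11,5],[8,11,11,3],[8,13,7,5],[8,13,9,3],[8,15,7,3]]),(10,[[10,7,11,5],[10,11,7,5],[10,11,9,3]]),(14,[[14,7,7,5],[14,7,9,3],[14,9,7,3]]),(9,[[9,7,11,6],[9,7,12,5],[9,7,14,3],[9,8,11,5],[9,8,13,3],[9,10,11,3],[9,11,7,6],[9,11,8,5],[9,11,10,3],[9,12,7,5],[9,12,9,3],[9,14,7,3]]),(12,[[12,7,11,3],[12,11,7,3]]),(16,[[16,7,7,3]]),(11,[[11,7,9,6],[11,9,10,3]]),(18,[]),(13,[[13,7,7,6],[13,7,8,5],[13,7,10,3],[13,8,7,5],[13,8,9,3],[13,10,7,3]]),(20,[]),(17,[]),(15,[])] = [(7,[[7,7,5,14],[7,7,9,10],[7,7,14,5],[7,7,16,3],[7,8,13,5],[7,8,15,3],[7,10,13,3],[7,11,9,6]]),(8,[[8,7,13,5],[8,7,15,3],[8,9,13,3]]),(10,[[10,7,13,3]]),(14,[[14,5,11,3]]),(9,[]),(12,[[12,5,11,5],[12,5,13,3],[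12,7,11,3]]),(16,[[16,5,7,5],[16,5,9,3],[16,7,7,3]]),(11,[[11,5,11,6],[11,5,12,5],[11,5,14,3],[11,6,11,5],[11,6,13,3],[11,7,9,6],[11,8,11,3],[11,9,10,3]]),(18,[[18,5,7,3]]),(13,[]),(20,[]),(17,[]),(15,[[15,5,7,6],[15,5,8,5],[15,5,10,3],[15,6,7,5],[15,6,9,3],[15,8,7,3]])]"
  by (simp add: oddS_tab)
lemma st36: "foldr insB (phiL (Suc (Suc (Suc (Suc 0)))) [11,5,11,6]) [(7,[[7,7,5,14],[7,7,9,10],[7,7,14,5],[7,7,16,3],[7,8,13,5],[7,8,15,3],[7,10,13,3],[7,11,9,6]]),(8,[[8,7,13,5],[8,7,15,3],[8,9,13,3]]),(10,[[10,7,13,3]]),(14,[[14,5,11,3]]),(9,[]),(12,[[12,5,11,5],[12,5,13,3],[12,7,11,3]]),(16,[[16,5,7,5],[16,5,9,3],[16,7,7,3]]),(11,[[11,5,11,6],[11,5,12,5],[11,5,14,3],[11,6,11,5],[11,6,13,3],[11,7,9,6],[11,8,11,3],[11,9,10,3]]),(18,[[18,5,7,3]]),(13,[]),(20,[]),(17,[]),(15,[[15,5,7,6],[15,5,8,5],[15,5,10,3],[15,6,7,5],[15,6,9,3],[15,8,7,3]])] = [(7,[[7,7,5,14],[7,7,9,10],[7,7,14,5],[7,7,16,3],[7,8,13,5],[7,8,15,3],[7,10,13,3],[7,11,9,6]]),(8,[[8,7,13,5],[8,7,15,3],[8,9,13,3]]),(10,[[10,7,13,3]]),(14,[[14,3,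11,5],[14,3,13,3],[14,5,11,3],[14,7,7,5],[14,7,9,3]]),(9,[]),(12,[[12,9,7,5],[12,9,9,3],[12,11,7,3]]),(16,[[16,3,11,3],[16,7,7,3]]),(11,[[11,7,9,6],[11,9,7,6],[11,9,8,5],[11,10,7,5],[11,10,9,3],[11,12,7,3]]),(18,[[18,3,7,5],[18,3,9,3],[18,5,7,3]]),(13,[[13,3,11,6],[13,3,12,5],[13,3,14,3],[13,4,11,5],[13,4,13,3],[13,6,11,3],[13,7,7,6],[13,7,8,5],[13,7,10,3],[13,8,7,5],[13,8,9,3],[13,10,7,3]]),(20,[[20,3,7,3]]),(17,[[17,3,7,6],[17,3,8,5],[17,3,10,3],[17,4,7,5],[17,4,9,3],[17,6,7,3]]),(15,[])]"
  by (simp add: oddS_tab)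
lemma st37: "foldr insB (phiL (Suc (Suc (Suc (Suc 0)))) [13,3,11,6]) [(7,[[7,7,5,14],[7,7,9,10],[7,7,14,5],[7,7,16,3],[7,8,13,5],[7,8,15,3],[7,10,13,3],[7,11,9,6]]),(8,[[8,7,13,5],[8,7,15,3],[8,9,13,3]]),(10,[[10,7,13,3]]),(14,[[14,3,11,5],[14,3,13,3],[14,5,11,3],[14,7,7,5],[14,7,9,3]]),(9,[]),(12,[[12,9,7,5],[12,9,9,3],[12,11,7,3]]),(16,[[16,3,11,3],[16,7,7,3]]),(11,[[11,7,9,6],[11,9,7,6],[11,9,8,5],[11,10,7,5],[11,10,9,3],[11,12,7,3]]),(18,[[18,3,7,5],[18,3,9,3],[18,5,7,3]]),(13,[[13,3,11,6],[13,3,12,5],[13,3,14,3],[13,4,11,5],[13,4,13,3],[13,6,11,3],[13,7,7,6],[13,7,8,5],[13,7,10,3],[13,8,7,5],[13,8,9,3],[13,10,7,3]]),(20,[[20,3,7,3]]),(17,[[17,3,7,6],[17,3,8,5],[17,3,10,3],[17,4,7,5],[17,4,9,3],[17,6,7,3]]),(15,[])] = [(7,[[7,7,5,14],[7,7,9,10],[7,7,14,5],[7,7,16,3],[7,8,13,5],[7,8,15,3],[7,10,13,3],[7,11,9,6]]),(8,[[8,7,13,5],[8,7,15,3],[8,9,13,3]]),(10,[[10,7,13,3]]),(14,[[14,9,7,3]]),(9,[]),(12,[[12,9,7,5],[12,9,9,3],[12,11,7,3]]),(16,[]),(11,[[11,7,9,6],[11,9,7,6],[11,9,8,5],[11,1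0,7,5],[11,10,9,3],[11,12,7,3]]),(18,[]),(13,[]),(20,[]),(17,[]),(15,[])]"
  by (simp add: oddS_tab)
lemma st38: "foldr insB (phiL (Suc (Suc (Suc (Suc 0)))) [11,7,9,6]) [(7,[[7,7,5,14],[7,7,9,10],[7,7,14,5],[7,7,16,3],[7,8,13,5],[7,8,15,3],[7,10,13,3],[7,11,9,6]]),(8,[[8,7,13,5],[8,7,15,3],[8,9,13,3]]),(10,[[10,7,13,3]]),(14,[[14,9,7,3]]),(9,[]),(12,[[12,9,7,5],[12,9,9,3],[12,11,7,3]]),(16,[]),(11,[[11,7,9,6],[11,9,7,6],[11,9,8,5],[11,10,7,5],[11,10,9,3],[11,12,7,3]]),(18,[]),(13,[]),(20,[]),(17,[]),(15,[])] = [(7,[[7,7,5,14],[7,7,9,10],[7,7,14,5],[7,7,16,3],[7,8,13,5],[7,8,15,3],[7,10,13,3],[7,11,9,6]]),(8,[[8,7,13,5],[8,7,15,3],[8,9,13,3]]),(10,[[10,7,13,3]]),(14,[[14,7,7,5],[14,9,7,3],[14,11,5,3]]),(9,[]),(12,[[12,7,9,5],[12,7,11,3],[12,9,9,3],[12,11,5,5],[12,11,7,3],[12,13,5,3]]),(16,[[16,7,5,5],[16,9,3,5],[16,11,3,3]]),(11,[[11,7,10,5],[11,7,12,3],[11,8,9,5],[11,8,11,3],[11,9,10,3],[11,10,9,3],[11,11,5,6],[11,11,6,5],[11,11,8,3],[11,12,5,5],[11,12,7,3],[11,14,5,3]]),(18,[[18,7,5,3],[18,9,3,3]]),(13,[[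13,7,7,6],[13,7,8,5],[13,7,10,3],[13,8,7,5],[13,8,9,3],[13,10,7,3]]),(20,[]),(17,[]),(15,[[15,7,5,6],[15,7,6,5],[15,7,8,3],[15,8,5,5],[15,8,7,3],[15,9,3,6],[15,9,4,5],[15,9,6,3],[15,10,3,5],[15,12,3,3]])]"
  by (simp add: oddS_tab)
lemma st39: "foldr insB (phiL (Suc (Suc (Suc (Suc 0)))) [13,7,7,6]) [(7,[[7,7,5,14],[7,7,9,10],[7,7,14,5],[7,7,16,3],[7,8,13,5],[7,8,15,3],[7,10,13,3],[7,11,9,6]]),(8,[[8,7,13,5],[8,7,15,3],[8,9,13,3]]),(10,[[10,7,13,3]]),(14,[[14,7,7,5],[14,9,7,3],[14,11,5,3]]),(9,[]),(12,[[12,7,9,5],[12,7,11,3],[12,9,9,3],[12,11,5,5],[12,11,7,3],[12,13,5,3]]),(16,[[16,7,5,5],[16,9,3,5],[16,11,3,3]]),(11,[[11,7,10,5],[11,7,12,3],[11,8,9,5],[11,8,11,3],[11,9,10,3],[11,10,9,3],[11,11,5,6],[11,11,6,5],[11,11,8,3],[11,12,5,5],[11,12,7,3],[11,14,5,3]]),(18,[[18,7,5,3],[18,9,3,3]]),(13,[[13,7,7,6],[13,7,8,5],[13,7,10,3],[13,8,7,5],[13,8,9,3],[13,10,7,3]]),(20,[]),(17,[]),(15,[[15,7,5,6],[15,7,6,5],[15,7,8,3],[15,8,5,5],[15,8,7,3],[15,9,3,6],[15,9,4,5],[15,9,6,3],[15,10,3,5],[15,12,3,3]])] = [(7,[[7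,7,5,14],[7,7,9,10],[7,7,14,5],[7,7,16,3],[7,8,13,5],[7,8,15,3],[7,10,13,3],[7,11,9,6]]),(8,[[8,7,13,5],[8,7,15,3],[8,9,13,3]]),(10,[[10,7,13,3]]),(14,[[14,7,9,3],[14,11,5,3]]),(9,[]),(12,[[12,7,9,5],[12,7,11,3],[12,9,9,3],[12,11,5,5],[12,11,7,3],[12,13,5,3]]),(16,[[16,7,5,5],[16,7,7,3],[16,9,3,5],[16,11,3,3]]),(11,[[11,7,10,5],[11,7,12,3],[11,8,9,5],[11,8,11,3],[11,9,10,3],[11,10,9,3],[11,11,5,6],[11,11,6,5],[11,11,8,3],[11,12,5,5],[11,12,7,3],[11,14,5,3]]),(18,[[18,7,5,3],[18,9,3,3]]),(13,[]),(20,[]),(17,[]),(15,[[15,7,5,6],[15,7,6,5],[15,7,8,3],[15,8,5,5],[15,8,7,3],[15,9,3,6],[15,9,4,5],[15,9,6,3],[15,10,3,5],[15,12,3,3]])]"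
  by (simp add: oddS_tab)
lemma st40: "foldr insB (phiL (Suc (Suc (Suc (Suc 0)))) [11,11,5,6]) [(7,[[7,7,5,14],[7,7,9,10],[7,7,14,5],[7,7,16,3],[7,8,13,5],[7,8,15,3],[7,10,13,3],[7,11,9,6]]),(8,[[8,7,13,5],[8,7,15,3],[8,9,13,3]]),(10,[[10,7,13,3]]),(14,[[14,7,9,3],[14,11,5,3]]),(9,[]),(12,[[12,7,9,5],[12,7,11,3],[12,9,9,3],[12,11,5,5],[12,11,7,3],[12,13,5,3]]),(16,[[16,7,5,5],[16,7,7,3],[16,9,3,5],[16,11,3,3]]),(11,[[11,7,10,5],[11,7,12,3],[11,8,9,5],[11,8,11,3],[11,9,10,3],[11,10,9,3],[11,11,5,6],[11,11,6,5],[11,11,8,3],[11,12,5,5],[11,12,7,3],[11,14,5,3]]),(18,[[18,7,5,3],[18,9,3,3]]),(13,[]),(20,[]),(17,[]),(15,[[15,7,5,6],[15,7,6,5],[15,7,8,3],[15,8,5,5],[15,8,7,3],[15,9,3,6],[15,9,4,5],[15,9,6,3],[15,10,3,5],[15,12,3,3]])] = [(7,[[7,7,5,14],[7,7,9,10],[7,7,14,5],[7,7,16,3],[7,8,13,5],[7,8,15,3],[7,10,13,3],[7,11,9,6]]),(8,[[8,7,13,5],[8,7,15,3],[8,9,13,3]]),(10,[[10,7,13,3]]),(14,[[14,7,9,3],[14,11,3,5],[14,11,5,3]]),(9,[]),(12,[[12,7,9,5],[12,7,11,3],[12,9,9,3],[12,13,3,5],[12,13,5,3],[12,15,3,3]]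),(16,[[16,11,3,3]]),(11,[[11,7,10,5],[11,7,12,3],[11,8,9,5],[11,8,11,3],[11,9,10,3],[11,10,9,3],[11,13,3,6],[11,13,4,5],[11,13,6,3],[11,14,3,5],[11,14,5,3],[11,16,3,3]]),(18,[[18,7,3,5],[18,7,5,3],[18,9,3,3]]),(13,[[13,11,3,6],[13,11,4,5],[13,11,6,3],[13,12,3,5],[13,12,5,3],[13,14,3,3]]),(20,[[20,7,3,3]]),(17,[[17,7,3,6],[17,7,4,5],[17,7,6,3],[17,8,3,5],[17,8,5,3],[17,10,3,3]]),(15,[])]"
  by (simp add: oddS_tab)
lemma st41: "foldr insB (phiL (Suc (Suc (Suc (Suc 0)))) [11,13,3,6]) [(7,[[7,7,5,14],[7,7,9,10],[7,7,14,5],[7,7,16,3],[7,8,13,5],[7,8,15,3],[7,10,13,3],[7,11,9,6]]),(8,[[8,7,13,5],[8,7,15,3],[8,9,13,3]]),(10,[[10,7,13,3]]),(14,[[14,7,9,3],[14,11,3,5],[14,11,5,3]]),(9,[]),(12,[[12,7,9,5],[12,7,11,3],[12,9,9,3],[12,13,3,5],[12,13,5,3],[12,15,3,3]]),(16,[[16,11,3,3]]),(11,[[11,7,10,5],[11,7,12,3],[11,8,9,5],[11,8,11,3],[11,9,10,3],[11,10,9,3],[11,13,3,6],[11,13,4,5],[11,13,6,3],[11,14,3,5],[11,14,5,3],[11,16,3,3]]),(18,[[18,7,3,5],[18,7,5,3],[18,9,3,3]]),(13,[[13,11,3,6],[13,11,4,5],[13,11,6,3],[13,12,3,5],[13,12,5,3],[13,14,3,3]]),(20,[[20,7,3,3]]),(17,[[17,7,3,6],[17,7,4,5],[17,7,6,3],[17,8,3,5],[17,8,5,3],[17,10,3,3]]),(15,[])]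 = [(7,[[7,7,5,14],[7,7,9,10],[7,7,14,5],[7,7,16,3],[7,8,13,5],[7,8,15,3],[7,10,13,3],[7,11,9,6]]),(8,[[8,7,13,5],[8,7,15,3],[8,9,13,3]]),(10,[[10,7,13,3]]),(14,[[14,7,9,3]]),(9,[]),(12,[[12,7,9,5],[12,7,11,3],[12,9,9,3]]),(16,[]),(11,[[11,7,10,5],[11,7,12,3],[11,8,9,5],[11,8,11,3],[11,9,10,3],[11,10,9,3]]),(18,[]),(13,[]),(20,[]),(17,[]),(15,[])]"
  by (simp add: oddS_tab)
lemma st42: "foldr insB (phiL (Suc (Suc (Suc (Suc 0)))) [7,7,14,5]) [(7,[[7,7,5,14],[7,7,9,10],[7,7,14,5],[7,7,16,3],[7,8,13,5],[7,8,15,3],[7,10,13,3],[7,11,9,6]]),(8,[[8,7,13,5],[8,7,15,3],[8,9,13,3]]),(10,[[10,7,13,3]]),(14,[[14,7,9,3]]),(9,[]),(12,[[12,7,9,5],[12,7,11,3],[12,9,9,3]]),(16,[]),(11,[[11,7,10,5],[11,7,12,3],[11,8,9,5],[11,8,11,3],[11,9,10,3],[11,10,9,3]]),(18,[]),(13,[]),(20,[]),(17,[]),(15,[])] = [(7,[[7,7,5,14],[7,7,9,10],[7,9,14,3],[7,10,11,5],[7,10,13,3],[7,11,9,6],[7,12,11,3],[7,14,7,5],[7,14,9,3],[7,16,7,3]]),(8,[[8,9,11,5],[8,9,13,3],[8,11,11,3],[8,13,7,5],[8,13,9,3],[8,15,7,3]]),(10,[[10,7,11,5],[10,7,13,3]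,[10,11,7,5],[10,11,9,3]]),(14,[[14,7,7,5],[14,9,7,3]]),(9,[[9,7,14,3],[9,8,13,3],[9,10,11,3],[9,14,7,3]]),(12,[[12,7,9,5],[12,9,9,3],[12,11,7,3]]),(16,[[16,7,7,3]]),(11,[[11,7,10,5],[11,7,12,3],[11,8,9,5],[11,8,11,3],[11,9,10,3],[11,10,9,3]]),(18,[]),(13,[]),(20,[]),(17,[]),(15,[])]"
  by (simp add: oddS_tab)
lemma st43: "foldr insB (phiL (Suc (Suc (Suc (Suc 0)))) [7,10,11,5]) [(7,[[7,7,5,14],[7,7,9,10],[7,9,14,3],[7,10,11,5],[7,10,13,3],[7,11,9,6],[7,12,11,3],[7,14,7,5],[7,14,9,3],[7,16,7,3]]),(8,[[8,9,11,5],[8,9,13,3],[8,11,11,3],[8,13,7,5],[8,13,9,3],[8,15,7,3]]),(10,[[10,7,11,5],[10,7,13,3],[10,11,7,5],[10,11,9,3]]),(14,[[14,7,7,5],[14,9,7,3]]),(9,[[9,7,14,3],[9,8,13,3],[9,10,11,3],[9,14,7,3]]),(12,[[12,7,9,5],[12,9,9,3],[12,11,7,3]]),(16,[[16,7,7,3]]),(11,[[11,7,10,5],[11,7,12,3],[11,8,9,5],[11,8,11,3],[11,9,10,3],[11,10,9,3]]),(18,[]),(13,[]),(20,[]),(17,[]),(15,[])] = [(7,[[7,7,5,14],[7,7,9,10],[7,9,14,3],[7,11,9,6]]),(8,[]),(10,[]),(14,[[14,5,11,3],[14,7,9,3]]),(9,[[9,7,14,3],[9,8,13,3]]),(12,[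[12,5,11,5],[12,5,13,3],[12,7,9,5],[12,9,9,3]]),(16,[[16,5,7,5],[16,5,9,3],[16,7,7,3]]),(11,[[11,6,11,5],[11,6,13,3],[11,7,10,5],[11,7,12,3],[11,8,9,5],[11,9,10,3],[11,10,9,3]]),(18,[[18,5,7,3]]),(13,[[13,6,11,3]]),(20,[]),(17,[[17,6,7,3]]),(15,[[15,6,7,5],[15,6,9,3],[15,8,7,3]])]"
  by (simp add: oddS_tab)
lemma st44: "foldr insB (phiL (Suc (Suc (Suc (Suc 0)))) [11,6,11,5]) [(7,[[7,7,5,14],[7,7,9,10],[7,9,14,3],[7,11,9,6]]),(8,[]),(10,[]),(14,[[14,5,11,3],[14,7,9,3]]),(9,[[9,7,14,3],[9,8,13,3]]),(12,[[12,5,11,5],[12,5,13,3],[12,7,9,5],[12,9,9,3]]),(16,[[16,5,7,5],[16,5,9,3],[16,7,7,3]]),(11,[[11,6,11,5],[11,6,13,3],[11,7,10,5],[11,7,12,3],[11,8,9,5],[11,9,10,3],[11,10,9,3]]),(18,[[18,5,7,3]]),(13,[[13,6,11,3]]),(20,[]),(17,[[17,6,7,3]]),(15,[[15,6,7,5],[15,6,9,3],[15,8,7,3]])] = [(7,[[7,7,5,14],[7,7,9,10],[7,9,14,3],[7,11,9,6]]),(8,[]),(10,[]),(14,[[14,3,11,5],[14,3,13,3],[14,5,11,3],[14,7,7,5]]),(9,[[9,7,14,3],[9,8,13,3]]),(12,[[12,7,9,5],[12,7,11,3],[12,9,7,5],[12,11,7,3]]),(16,[[16,3,11,3],[16,7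,7,3]]),(11,[[11,7,10,5],[11,7,12,3],[11,8,9,5],[11,8,11,3],[11,9,10,3],[11,10,7,5],[11,12,7,3]]),(18,[[18,3,7,5],[18,3,9,3],[18,5,7,3]]),(13,[[13,10,7,3]]),(20,[[20,3,7,3]]),(17,[]),(15,[])]"
  by (simp add: oddS_tab)
lemma st45: "foldr insB (phiL (Suc (Suc (Suc (Suc 0)))) [14,3,11,5]) [(7,[[7,7,5,14],[7,7,9,10],[7,9,14,3],[7,11,9,6]]),(8,[]),(10,[]),(14,[[14,3,11,5],[14,3,13,3],[14,5,11,3],[14,7,7,5]]),(9,[[9,7,14,3],[9,8,13,3]]),(12,[[12,7,9,5],[12,7,11,3],[12,9,7,5],[12,11,7,3]]),(16,[[16,3,11,3],[16,7,7,3]]),(11,[[11,7,10,5],[11,7,12,3],[11,8,9,5],[11,8,11,3],[11,9,10,3],[11,10,7,5],[11,12,7,3]]),(18,[[18,3,7,5],[18,3,9,3],[18,5,7,3]]),(13,[[13,10,7,3]]),(20,[[20,3,7,3]]),(17,[]),(15,[])] = [(7,[[7,7,5,14],[7,7,9,10],[7,9,14,3],[7,11,9,6]]),(8,[]),(10,[]),(14,[[14,7,9,3],[14,9,7,3]]),(9,[[9,7,14,3],[9,8,13,3]]),(12,[[12,7,9,5],[12,7,11,3],[12,9,7,5],[12,11,7,3]]),(16,[]),(11,[[11,7,10,5],[11,7,12,3],[11,8,9,5],[11,8,11,3],[11,9,10,3],[11,10,7,5],[11,12,7,3]]),(18,[]),(13,[[13,10,7,3]]),(20,[]),(17,[]),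(15,[])]"
  by (simp add: oddS_tab)
lemma st46: "foldr insB (phiL (Suc (Suc (Suc (Suc 0)))) [11,7,10,5]) [(7,[[7,7,5,14],[7,7,9,10],[7,9,14,3],[7,11,9,6]]),(8,[]),(10,[]),(14,[[14,7,9,3],[14,9,7,3]]),(9,[[9,7,14,3],[9,8,13,3]]),(12,[[12,7,9,5],[12,7,11,3],[12,9,7,5],[12,11,7,3]]),(16,[]),(11,[[11,7,10,5],[11,7,12,3],[11,8,9,5],[11,8,11,3],[11,9,10,3],[11,10,7,5],[11,12,7,3]]),(18,[]),(13,[[13,10,7,3]]),(20,[]),(17,[]),(15,[])] = [(7,[[7,7,5,14],[7,7,9,10],[7,9,14,3],[7,11,9,6]]),(8,[]),(10,[]),(14,[[14,7,7,5],[14,7,9,3],[14,9,7,3],[14,11,5,3]]),(9,[[9,7,14,3],[9,8,13,3]]),(12,[[12,11,5,5],[12,11,7,3],[12,13,5,3]]),(16,[[16,7,5,5],[16,9,3,5],[16,11,3,3]]),(11,[[11,11,6,5],[11,11,8,3],[11,12,5,5],[11,12,7,3],[11,13,6,3],[11,14,5,3]]),(18,[[18,7,5,3],[18,9,3,3]]),(13,[[13,7,10,3],[13,8,9,3],[13,11,6,3],[13,12,5,3]]),(20,[]),(17,[[17,7,6,3],[17,8,5,3],[17,10,3,3]]),(15,[[15,7,6,5],[15,7,8,3],[15,8,5,5],[15,8,7,3],[15,9,6,3],[15,10,3,5],[15,12,3,3]])]"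
  by (simp add: oddS_tab)
lemma st47: "foldr insB (phiL (Suc (Suc (Suc (Suc 0)))) [14,7,7,5]) [(7,[[7,7,5,14],[7,7,9,10],[7,9,14,3],[7,11,9,6]]),(8,[]),(10,[]),(14,[[14,7,7,5],[14,7,9,3],[14,9,7,3],[14,11,5,3]]),(9,[[9,7,14,3],[9,8,13,3]]),(12,[[12,11,5,5],[12,11,7,3],[12,13,5,3]]),(16,[[16,7,5,5],[16,9,3,5],[16,11,3,3]]),(11,[[11,11,6,5],[11,11,8,3],[11,12,5,5],[11,12,7,3],[11,13,6,3],[11,14,5,3]]),(18,[[18,7,5,3],[18,9,3,3]]),(13,[[13,7,10,3],[13,8,9,3],[13,11,6,3],[13,12,5,3]]),(20,[]),(17,[[17,7,6,3],[17,8,5,3],[17,10,3,3]]),(15,[[15,7,6,5],[15,7,8,3],[15,8,5,5],[15,8,7,3],[15,9,6,3],[15,10,3,5],[15,12,3,3]])] = [(7,[[7,7,5,14],[7,7,9,10],[7,9,14,3],[7,11,9,6]]),(8,[]),(10,[]),(14,[[14,11,5,3]]),(9,[[9,7,14,3],[9,8,13,3]]),(12,[[12,11,5,5],[12,11,7,3],[12,13,5,3]]),(16,[[16,7,5,5],[16,7,7,3],[16,9,3,5],[16,11,3,3]]),(11,[[11,11,6,5],[11,11,8,3],[11,12,5,5],[11,12,7,3],[11,13,6,3],[11,14,5,3]]),(18,[[18,7,5,3],[18,9,3,3]]),(13,[[13,7,10,3],[13,8,9,3],[13,11,6,3],[13,12,5,3]]),(20,[]),(17,[[17,7,6,3],[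17,8,5,3],[17,10,3,3]]),(15,[[15,7,6,5],[15,7,8,3],[15,8,5,5],[15,8,7,3],[15,9,6,3],[15,10,3,5],[15,12,3,3]])]"
  by (simp add: oddS_tab)
lemma st48: "foldr insB (phiL (Suc (Suc (Suc (Suc 0)))) [11,11,6,5]) [(7,[[7,7,5,14],[7,7,9,10],[7,9,14,3],[7,11,9,6]]),(8,[]),(10,[]),(14,[[14,11,5,3]]),(9,[[9,7,14,3],[9,8,13,3]]),(12,[[12,11,5,5],[12,11,7,3],[12,13,5,3]]),(16,[[16,7,5,5],[16,7,7,3],[16,9,3,5],[16,11,3,3]]),(11,[[11,11,6,5],[11,11,8,3],[11,12,5,5],[11,12,7,3],[11,13,6,3],[11,14,5,3]]),(18,[[18,7,5,3],[18,9,3,3]]),(13,[[13,7,10,3],[13,8,9,3],[13,11,6,3],[13,12,5,3]]),(20,[]),(17,[[17,7,6,3],[17,8,5,3],[17,10,3,3]]),(15,[[15,7,6,5],[15,7,8,3],[15,8,5,5],[15,8,7,3],[15,9,6,3],[15,10,3,5],[15,12,3,3]])] = [(7,[[7,7,5,14],[7,7,9,10],[7,9,14,3],[7,11,9,6]]),(8,[]),(10,[]),(14,[[14,11,3,5],[14,11,5,3]]),(9,[[9,7,14,3],[9,8,13,3]]),(12,[[12,13,3,5],[12,13,5,3],[12,15,3,3]]),(16,[[16,11,3,3]]),(11,[[11,14,3,5],[11,14,5,3],[11,16,3,3]]),(18,[[18,7,3,5],[18,7,5,3],[18,9,3,3]]),(13,[[13,7,10,3],[13,8,9,3],[13,14,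3,3]]),(20,[[20,7,3,3]]),(17,[]),(15,[])]"
  by (simp add: oddS_tab)
lemma st49: "foldr insB (phiL (Suc (Suc (Suc (Suc 0)))) [11,14,3,5]) [(7,[[7,7,5,14],[7,7,9,10],[7,9,14,3],[7,11,9,6]]),(8,[]),(10,[]),(14,[[14,11,3,5],[14,11,5,3]]),(9,[[9,7,14,3],[9,8,13,3]]),(12,[[12,13,3,5],[12,13,5,3],[12,15,3,3]]),(16,[[16,11,3,3]]),(11,[[11,14,3,5],[11,14,5,3],[11,16,3,3]]),(18,[[18,7,3,5],[18,7,5,3],[18,9,3,3]]),(13,[[13,7,10,3],[13,8,9,3],[13,14,3,3]]),(20,[[20,7,3,3]]),(17,[]),(15,[])] = [(7,[[7,7,5,14],[7,7,9,10],[7,9,14,3],[7,11,9,6]]),(8,[]),(10,[]),(14,[]),(9,[[9,7,14,3],[9,8,13,3]]),(12,[]),(16,[]),(11,[]),(18,[]),(13,[[13,7,10,3],[13,8,9,3]]),(20,[]),(17,[]),(15,[])]"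
  by (simp add: oddS_tab)
lemma st50: "foldr insB (phiL (Suc (Suc (Suc (Suc 0)))) [7,9,14,3]) [(7,[[7,7,5,14],[7,7,9,10],[7,9,14,3],[7,11,9,6]]),(8,[]),(10,[]),(14,[]),(9,[[9,7,14,3],[9,8,13,3]]),(12,[]),(16,[]),(11,[]),(18,[]),(13,[[13,7,10,3],[13,8,9,3]]),(20,[]),(17,[]),(15,[])] = [(7,[[7,7,5,14],[7,7,9,10],[7,10,13,3],[7,11,9,6],[7,12,11,3],[7,16,7,3]]),(8,[[8,9,13,3],[8,11,11,3],[8,15,7,3]]),(10,[[10,7,13,3]]),(14,[[14,5,11,3]]),(9,[[9,10,11,3],[9,14,7,3]]),(12,[[12,5,13,3]]),(16,[[16,7,7,3]]),(11,[[11,5,14,3],[11,6,13,3],[11,8,11,3],[11,12,7,3]]),(18,[[18,5,7,3]]),(13,[[13,7,10,3],[13,8,9,3]]),(20,[]),(17,[]),(15,[])]"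
  by (simp add: oddS_tab)
lemma st51: "foldr insB (phiL (Suc (Suc (Suc (Suc 0)))) [11,5,14,3]) [(7,[[7,7,5,14],[7,7,9,10],[7,10,13,3],[7,11,9,6],[7,12,11,3],[7,16,7,3]]),(8,[[8,9,13,3],[8,11,11,3],[8,15,7,3]]),(10,[[10,7,13,3]]),(14,[[14,5,11,3]]),(9,[[9,10,11,3],[9,14,7,3]]),(12,[[12,5,13,3]]),(16,[[16,7,7,3]]),(11,[[11,5,14,3],[11,6,13,3],[11,8,11,3],[11,12,7,3]]),(18,[[18,5,7,3]]),(13,[[13,7,10,3],[13,8,9,3]]),(20,[]),(17,[]),(15,[])] = [(7,[[7,7,5,14],[7,7,9,10],[7,10,13,3],[7,11,9,6],[7,12,11,3],[7,16,7,3]]),(8,[[8,9,13,3],[8,11,11,3],[8,15,7,3]]),(10,[[10,7,13,3]]),(14,[[14,3,13,3],[14,5,11,3]]),(9,[[9,10,11,3],[9,14,7,3]]),(12,[[12,7,11,3],[12,11,7,3]]),(16,[[16,3,11,3]]),(11,[]),(18,[]),(13,[[13,3,14,3],[13,4,13,3],[13,6,11,3],[13,7,10,3],[13,8,9,3],[13,10,7,3]]),(20,[[20,3,7,3]]),(17,[]),(15,[])]"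
  by (simp add: oddS_tab)
lemma st52: "foldr insB (phiL (Suc (Suc (Suc (Suc 0)))) [13,3,14,3]) [(7,[[7,7,5,14],[7,7,9,10],[7,10,13,3],[7,11,9,6],[7,12,11,3],[7,16,7,3]]),(8,[[8,9,13,3],[8,11,11,3],[8,15,7,3]]),(10,[[10,7,13,3]]),(14,[[14,3,13,3],[14,5,11,3]]),(9,[[9,10,11,3],[9,14,7,3]]),(12,[[12,7,11,3],[12,11,7,3]]),(16,[[16,3,11,3]]),(11,[]),(18,[]),(13,[[13,3,14,3],[13,4,13,3],[13,6,11,3],[13,7,10,3],[13,8,9,3],[13,10,7,3]]),(20,[[20,3,7,3]]),(17,[]),(15,[])] = [(7,[[7,7,5,14],[7,7,9,10],[7,10,13,3],[7,11,9,6],[7,12,11,3],[7,16,7,3]]),(8,[[8,9,13,3],[8,11,11,3],[8,15,7,3]]),(10,[[10,7,13,3]]),(14,[[14,9,7,3]]),(9,[[9,10,11,3],[9,14,7,3]]),(12,[[12,7,11,3],[12,11,7,3]]),(16,[[16,7,7,3]]),(11,[]),(18,[]),(13,[[13,7,10,3],[13,8,9,3]]),(20,[]),(17,[]),(15,[])]"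
  by (simp add: oddS_tab)
lemma st53: "foldr insB (phiL (Suc (Suc (Suc (Suc 0)))) [7,10,13,3]) [(7,[[7,7,5,14],[7,7,9,10],[7,10,13,3],[7,11,9,6],[7,12,11,3],[7,16,7,3]]),(8,[[8,9,13,3],[8,11,11,3],[8,15,7,3]]),(10,[[10,7,13,3]]),(14,[[14,9,7,3]]),(9,[[9,10,11,3],[9,14,7,3]]),(12,[[12,7,11,3],[12,11,7,3]]),(16,[[16,7,7,3]]),(11,[]),(18,[]),(13,[[13,7,10,3],[13,8,9,3]]),(20,[]),(17,[]),(15,[])] = [(7,[[7,7,5,14],[7,7,9,10],[7,11,9,6]]),(8,[]),(10,[]),(14,[[14,5,11,3],[14,9,7,3]]),(9,[]),(12,[[12,5,13,3],[12,7,11,3],[12,11,7,3]]),(16,[]),(11,[[11,6,13,3],[11,8,11,3],[11,12,7,3]]),(18,[[18,5,7,3]]),(13,[[13,6,11,3],[13,7,10,3],[13,8,9,3]]),(20,[]),(17,[[17,6,7,3]]),(15,[])]"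
  by (simp add: oddS_tab)
lemma st54: "foldr insB (phiL (Suc (Suc (Suc (Suc 0)))) [11,6,13,3]) [(7,[[7,7,5,14],[7,7,9,10],[7,11,9,6]]),(8,[]),(10,[]),(14,[[14,5,11,3],[14,9,7,3]]),(9,[]),(12,[[12,5,13,3],[12,7,11,3],[12,11,7,3]]),(16,[]),(11,[[11,6,13,3],[11,8,11,3],[11,12,7,3]]),(18,[[18,5,7,3]]),(13,[[13,6,11,3],[13,7,10,3],[13,8,9,3]]),(20,[]),(17,[[17,6,7,3]]),(15,[])] = [(7,[[7,7,5,14],[7,7,9,10],[7,11,9,6]]),(8,[]),(10,[]),(14,[[14,3,13,3],[14,5,11,3],[14,9,7,3]]),(9,[]),(12,[]),(16,[[16,3,11,3],[16,7,7,3]]),(11,[]),(18,[]),(13,[[13,7,10,3],[13,8,9,3],[13,10,7,3]]),(20,[[20,3,7,3]]),(17,[]),(15,[])]"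
  by (simp add: oddS_tab)
lemma st55: "foldr insB (phiL (Suc (Suc (Suc (Suc 0)))) [14,3,13,3]) [(7,[[7,7,5,14],[7,7,9,10],[7,11,9,6]]),(8,[]),(10,[]),(14,[[14,3,13,3],[14,5,11,3],[14,9,7,3]]),(9,[]),(12,[]),(16,[[16,3,11,3],[16,7,7,3]]),(11,[]),(18,[]),(13,[[13,7,10,3],[13,8,9,3],[13,10,7,3]]),(20,[[20,3,7,3]]),(17,[]),(15,[])] = [(7,[[7,7,5,14],[7,7,9,10],[7,11,9,6]]),(8,[]),(10,[]),(14,[]),(9,[]),(12,[]),(16,[]),(11,[]),(18,[]),(13,[[13,7,10,3],[13,8,9,3],[13,10,7,3]]),(20,[]),(17,[]),(15,[])]"
  by (simp add: oddS_tab)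
lemma st56: "foldr insB (phiL (Suc (Suc (Suc (Suc 0)))) [13,7,10,3]) [(7,[[7,7,5,14],[7,7,9,10],[7,11,9,6]]),(8,[]),(10,[]),(14,[]),(9,[]),(12,[]),(16,[]),(11,[]),(18,[]),(13,[[13,7,10,3],[13,8,9,3],[13,10,7,3]]),(20,[]),(17,[]),(15,[])] = [(7,[[7,7,5,14],[7,7,9,10],[7,11,9,6]]),(8,[]),(10,[]),(14,[[14,7,9,3],[14,9,7,3],[14,11,5,3]]),(9,[]),(12,[]),(16,[[16,7,7,3]]),(11,[]),(18,[[18,7,5,3],[18,9,3,3]]),(13,[[13,11,6,3],[13,12,5,3]]),(20,[]),(17,[[17,7,6,3],[17,8,5,3],[17,10,3,3]]),(15,[])]"
  by (simp add: oddS_tab)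
lemma st57: "foldr insB (phiL (Suc (Suc (Suc (Suc 0)))) [14,7,9,3]) [(7,[[7,7,5,14],[7,7,9,10],[7,11,9,6]]),(8,[]),(10,[]),(14,[[14,7,9,3],[14,9,7,3],[14,11,5,3]]),(9,[]),(12,[]),(16,[[16,7,7,3]]),(11,[]),(18,[[18,7,5,3],[18,9,3,3]]),(13,[[13,11,6,3],[13,12,5,3]]),(20,[]),(17,[[17,7,6,3],[17,8,5,3],[17,10,3,3]]),(15,[])] = [(7,[[7,7,5,14],[7,7,9,10],[7,11,9,6]]),(8,[]),(10,[]),(14,[]),(9,[]),(12,[]),(16,[]),(11,[]),(18,[]),(13,[[13,11,6,3],[13,12,5,3]]),(20,[]),(17,[[17,7,6,3],[17,8,5,3],[17,10,3,3]]),(15,[])]"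
  by (simp add: oddS_tab)
lemma st58: "foldr insB (phiL (Suc (Suc (Suc (Suc 0)))) [13,11,6,3]) [(7,[[7,7,5,14],[7,7,9,10],[7,11,9,6]]),(8,[]),(10,[]),(14,[]),(9,[]),(12,[]),(16,[]),(11,[]),(18,[]),(13,[[13,11,6,3],[13,12,5,3]]),(20,[]),(17,[[17,7,6,3],[17,8,5,3],[17,10,3,3]]),(15,[])] = [(7,[[7,7,5,14],[7,7,9,10],[7,11,9,6]]),(8,[]),(10,[]),(14,[[14,11,5,3],[14,13,3,3]]),(9,[]),(12,[]),(16,[[16,11,3,3]]),(11,[]),(18,[[18,7,5,3],[18,9,3,3]]),(13,[[13,14,3,3]]),(20,[[20,7,3,3]]),(17,[]),(15,[])]"
  by (simp add: oddS_tab)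
lemma st59: "foldr insB (phiL (Suc (Suc (Suc (Suc 0)))) [14,11,5,3]) [(7,[[7,7,5,14],[7,7,9,10],[7,11,9,6]]),(8,[]),(10,[]),(14,[[14,11,5,3],[14,13,3,3]]),(9,[]),(12,[]),(16,[[16,11,3,3]]),(11,[]),(18,[[18,7,5,3],[18,9,3,3]]),(13,[[13,14,3,3]]),(20,[[20,7,3,3]]),(17,[]),(15,[])] = [(7,[[7,7,5,14],[7,7,9,10],[7,11,9,6]]),(8,[]),(10,[]),(14,[]),(9,[]),(12,[]),(16,[]),(11,[]),(18,[]),(13,[[13,14,3,3]]),(20,[]),(17,[]),(15,[])]"
  by (simp add: oddS_tab)
lemma st60: "foldr insB (phiL (Suc (Suc (Suc (Suc 0)))) [13,14,3,3]) [(7,[[7,7,5,14],[7,7,9,10],[7,11,9,6]]),(8,[]),(10,[]),(14,[]),(9,[]),(12,[]),(16,[]),(11,[]),(18,[]),(13,[[13,14,3,3]]),(20,[]),(17,[]),(15,[])] = [(7,[[7,7,5,14],[7,7,9,10],[7,11,9,6]]),(8,[]),(10,[]),(14,[[14,13,3,3]]),(9,[]),(12,[]),(16,[[16,11,3,3]]),(11,[]),(18,[]),(13,[]),(20,[[20,7,3,3]]),(17,[]),(15,[])]"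
  by (simp add: oddS_tab)
lemma st61: "foldr insB (phiL (Suc (Suc (Suc (Suc 0)))) [14,13,3,3]) [(7,[[7,7,5,14],[7,7,9,10],[7,11,9,6]]),(8,[]),(10,[]),(14,[[14,13,3,3]]),(9,[]),(12,[]),(16,[[16,11,3,3]]),(11,[]),(18,[]),(13,[]),(20,[[20,7,3,3]]),(17,[]),(15,[])] = [(7,[[7,7,5,14],[7,7,9,10],[7,11,9,6]]),(8,[]),(10,[]),(14,[]),(9,[]),(12,[]),(16,[]),(11,[]),(18,[]),(13,[]),(20,[]),(17,[]),(15,[])]"
  by (simp add: oddS_tab)

lemma runB_XL: "runB (phiL (Suc (Suc (Suc (Suc 0))))) XL [] = [(7,[[7,7,5,14],[7,7,9,10],[7,11,9,6]]),(8,[]),(10,[]),(14,[]),(9,[]),(12,[]),(16,[]),(11,[]),(18,[]),(13,[]),(20,[]),(17,[]),(15,[])]"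
  unfolding XL_def by (simp only: runB.simps st0 st1 st2 st3 st4 st5 st6 st7 st8 st9 st10 st11 st12 st13 st14 st15 st16 st17 st18 st19 st20 st21 st22 st23 st24 st25 st26 st27 st28 st29 st30 st31 st32 st33 st34 st35 st36 st37 st38 st39 st40 st41 st42 st43 st44 st45 st46 st47 st48 st49 st50 st51 st52 st53 st54 st55 st56 st57 st58 st59 st60 st61)

lemma pr1: "foldr ins (concat (map (sqL 1) XL)) [] = []"
  by (simp add: oddS_tab sqL_def XL_def)
lemma pr2: "foldr ins (concat (map (sqL 2) XL)) [] = []"
  by (simp add: oddS_tab sqL_def XL_def)
lemma pr4: "foldr ins (concat (map (sqL 4) XL)) [] = []"
  by (simp add: oddS_tab sqL_def XL_def)
lemma pr8: "foldr ins (concat (map (sqL 8) XL)) [] = []"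
  by (simp add: oddS_tab sqL_def XL_def)
lemma pr16: "foldr ins (concat (map (sqL 16) XL)) [] = []"
  by (simp add: oddS_tab sqL_def XL_def)
lemma pr32: "foldr ins (concat (map (sqL 32) XL)) [] = []"
  by (simp add: oddS_tab sqL_def XL_def)

lemma XL_props: "\<forall>m\<in>set XL. length m = 4 \<and> sum_list m = 33"
  by (simp add: XL_def)

lemma phiL4: "phiL 4 = phiL (Suc (Suc (Suc (Suc 0))))"
  by (simp add: numeral_eq_Suc)

lemma cnt_zero_of_foldr: "foldr ins L [] = [] \<Longrightarrow> cnt L = (\<lambda>_. 0)"
proof
  fix w assume "foldr ins L [] = []"
  then have "cnt L w + cnt [] w = cnt [] w" by (metis cnt_foldr_ins)
  then show "cnt L w = 0" by (simp add: cnt_Nil)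
qed

lemma sqL_big: "m \<in> set XL \<Longrightarrow> 33 < j \<Longrightarrow> sqL j m = []"
  using XL_props unfolding sqL_def by (auto simp: filter_empty_conv)

theorem mainTheorem4:
  fixes x y :: "nat list \<Rightarrow> bit"
  assumes "y = vec_of_list [[7,7,5,14], [7,7,9,10], [7,11,9,6]]"
    and "x = vec_of_list (map rev
      [[14,5,7,7], [14,3,9,7], [14,3,5,11], [14,3,3,13], [13,6,7,7], [13,3,10,7], [13,3,6,11],
       [13,3,3,14], [11,6,9,7], [11,6,5,11], [11,6,3,13], [11,5,10,7], [11,5,6,11], [11,5,3,14],
       [10,9,7,7], [10,7,9,7], [10,7,5,11], [10,7,3,13], [10,5,11,7], [10,3,13,7], [9,10,7,7],
       [9,7,10,7], [9,7,6,11], [9,7,3,14], [9,6,11,7], [9,3,14,7], [7,10,9,7], [7,10,5,11],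
       [7,10,3,13], [7,9,10,7], [7,9,6,11], [7,9,3,14], [7,6,13,7], [7,5,14,7], [6,13,7,7],
       [6,11,9,7], [6,11,5,11], [6,11,3,13], [6,9,7,11], [6,7,7,13], [6,5,11,11], [6,3,13,11],
       [5,14,7,7], [5,11,10,7], [5,11,6,11], [5,11,3,14], [5,10,7,11], [5,7,7,14], [5,6,11,11],
       [5,3,14,11], [3,14,9,7], [3,14,5,11], [3,14,3,13], [3,13,10,7], [3,13,6,11], [3,13,3,14],
       [3,10,7,13], [3,9,7,14], [3,6,11,13], [3,5,11,14], [3,3,14,13], [3,3,13,14]])"
  shows "homogeneous_H 4 33 x \<and> is_A_primitive x \<and> lambda_eq (phi_lin 4 x) y"

proof -
  have xc: "x = cnt XL"
    using assms(2) by (simp add: vec_of_list_cnt XL_def)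
  have yc: "y = cnt [[7,7,5,14], [7,7,9,10], [7,11,9,6]]"
    using assms(1) by (simp add: vec_of_list_cnt)
  have hom: "homogeneous_H 4 33 x"
    unfolding homogeneous_H_def xc
    using supp_cnt[of XL] XL_props by (auto intro: finite_subset)
  have sqx: "Sq_dual j x = cnt (concat (map (sqL j) XL))" for j
  proof -
    have "sqm j = (\<lambda>w. cnt (sqL j w))" by (intro ext) (simp add: sqm_eq)
    then show ?thesis unfolding Sq_dual_def xc by (simp add: lin_cnt_cnt)
  qed
  have prim: "is_A_primitive x"
    unfolding is_A_primitive_def
  proof
    fix t :: nat
    show "Sq_dual (2 ^ t) x = (\<lambda>_. 0)"
    proof (cases "t \<le> 5")
      case True
      then have "t = 0 \<or> t = 1 \<or> t = 2 \<or> t = 3 \<or> t = 4 \<or> t = 5" by auto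
      then show ?thesis unfolding sqx
        by (elim disjE) (simp_all add: cnt_zero_of_foldr pr1 pr1[unfolded One_nat_def] pr2 pr4 pr8 pr16 pr32)
    next
      case False
      have "(2::nat) ^ 6 \<le> 2 ^ t" using False by (intro power_increasing) auto
      then have "33 < (2::nat) ^ t" by simp
      then have e: "concat (map (sqL (2 ^ t)) XL) = []" using sqL_big by auto
      show ?thesis unfolding sqx e by (auto simp: cnt_Nil)
    qed
  qed
  have phx: "phi_lin 4 x = y"
  proof
    fix w
    have ph: "phi 4 = (\<lambda>v. cnt (phiL 4 v))" by (intro ext) (simp add: phi_eq)
    have "phi_lin 4 x w = cnt (concat (map (phiL (Suc (Suc (Suc (Suc 0))))) XL)) w"
      unfolding phi_lin_def xc ph lin_cnt_cnt phiL4 by simp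
    also have "\<dots> = cnt (concat (map snd (runB (phiL (Suc (Suc (Suc (Suc 0))))) XL []))) w"
      by (simp add: cnt_runB cnt_Nil)
    also have "\<dots> = y w"
      unfolding runB_XL yc by simp
    finally show "phi_lin 4 x w = y w" .
  qed
  have "lambda_eq (phi_lin 4 x) y"
    unfolding lambda_eq_def phx by (simp add: adem_ideal.zero)
  then show ?thesis using hom prim by simp
qed

end
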